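(* For every integer $t\ge 2$, there exists a $(12t+10,3,2)$-BIBD $(X,\mathcal{A})$ with a weak nesting $\phi:\mathcal{A}\to Y$, $X\subseteq Y$, where $|Y|=w=14t+13$.
   Context: A $(v,k,\lambda)$-BIBD is a pair $(X,\mathcal{A})$ where $X$ is a set of $v$ points and $\mathcal{A}$ is a multiset of $k$-subsets of $X$ (blocks) such that every pair of distinct points lies in exactly $\lambda$ blocks. A partial $(w,k,\lambda)$-BIBD is defined in the same way on $w$ points, except that every pair lies in at most $\lambda$ blocks. Given a $(v,k,\lambda)$-BIBD $(X,\mathcal{A})$ and a set $Y\supseteq X$ with $|Y|=w$, a map $\phi:\mathcal{A}\to Y$ is a weak nesting if $\phi(A)\notin A$ for every block $A$ and the multiset $\{A\cup\{\phi(A)\}:A\in\mathcal{A}\}$ is a partial $(w,k+1,\lambda+1)$-BIBD on $Y$. *)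

theory Defs
  imports Main
begin

text \<open>A design is given by a finite index set I of block labels and a map B
from labels to blocks; the multiset of blocks is the image multiset of B over I
(repeated blocks are allowed, via distinct labels with equal blocks).\<close>

definition pair_count :: "'i set \<Rightarrow> ('i \<Rightarrow> 'a set) \<Rightarrow> 'a \<Rightarrow> 'a \<Rightarrow> nat" where
  "pair_count I B x y = card {i \<in> I. x \<in> B i \<and> y \<in> B i}"

definition is_BIBD :: "'a set \<Rightarrow> nat \<Rightarrow> nat \<Rightarrow> nat \<Rightarrow> 'i set \<Rightarrow> ('i \<Rightarrow> 'a set) \<Rightarrow> bool" where
  "is_BIBD X v k  lam I B \<longleftrightarrow>
     finite X \<and> card X = v \<and> finite I \<and>
     (\<forall>i\<in>I. B i \<subseteq> X \<and> card (B i) = k) \<and>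
     (\<forall>x\<in>X. \<forall>y\<in>X. x \<noteq> y \<longrightarrow> pair_count I B x y = lam)"

definition is_partial_BIBD :: "'a set \<Rightarrow> nat \<Rightarrow> nat \<Rightarrow> nat \<Rightarrow> 'i set \<Rightarrow> ('i \<Rightarrow> 'a set) \<Rightarrow> bool" where
  "is_partial_BIBD Y w k  lam I B \<longleftrightarrow>
     finite Y \<and> card Y = w \<and> finite I \<and>
     (\<forall>i\<in>I. B i \<subseteq> Y \<and> card (B i) = k) \<and>
     (\<forall>x\<in>Y. \<forall>y\<in>Y. x \<noteq> y \<longrightarrow> pair_count I B x y \<le> lam)"

definition is_weak_nesting :: "'a set \<Rightarrow> nat \<Rightarrow> 'i set \<Rightarrow> ('i \<Rightarrow> 'a set) \<Rightarrow> nat \<Rightarrow> nat \<Rightarrow> ('i \<Rightarrow> 'a) \<Rightarrow> bool" where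
  "is_weak_nesting Y w I B k lam \<phi> \<longleftrightarrow>
     (\<forall>i\<in>I. \<phi> i \<in> Y \<and> \<phi> i \<notin> B i) \<and>
     is_partial_BIBD Y w (k + 1) (lam + 1) I (\<lambda>i. insert (\<phi> i) (B i))"

end

theory Submission
  imports Defs "HOL-Library.Countable"
begin

lemma pc_transfer:
  fixes f :: "'a::countable \<Rightarrow> nat" and B :: "'i::countable \<Rightarrow> 'a set"
  assumes "f = to_nat"
  shows "pair_count (to_nat ` I) (\<lambda>j. f ` B (from_nat j)) (f x) (f y) = pair_count I B x y"
proof -
  have "{j \<in> to_nat ` I. f x \<in> f ` B (from_nat j) \<and> f y \<in> f ` B (from_nat j)}
        = to_nat ` {i \<in> I. x \<in> B i \<and> y \<in> B i}"
    using assms by (auto simp: image_iff)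
  moreover have "card (to_nat ` {i \<in> I. x \<in> B i \<and> y \<in> B i}) = card {i \<in> I. x \<in> B i \<and> y \<in> B i}"
    by (rule card_image) (simp add: inj_on_def)
  ultimately show ?thesis unfolding pair_count_def by simp
qed

lemma transfer_all:
  fixes X Y :: "'a::countable set" and I :: "'i::countable set" and B :: "'i \<Rightarrow> 'a set"
    and \<phi> :: "'i \<Rightarrow> 'a"
  assumes b: "is_BIBD X v k l I B" and sub: "X \<subseteq> Y" and fy: "finite Y" and cy: "card Y = w"
    and n: "is_weak_nesting Y w I B k l \<phi>"
  shows "\<exists>(X' :: nat set) (Y' :: nat set) (I' :: nat set) (B' :: nat \<Rightarrow> nat set) (\<phi>' :: nat \<Rightarrow> nat).
           is_BIBD X' v k l I' B' \<and> X' \<subseteq> Y' \<and> finite Y' \<and> card Y' = w \<and>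
           is_weak_nesting Y' w I' B' k l \<phi>'"
proof (intro exI conjI)
  let ?f = "to_nat :: 'a \<Rightarrow> nat"
  have injf: "inj_on ?f S" for S by (simp add: inj_on_def)
  have cardf: "card (?f ` S) = card S" for S by (rule card_image[OF injf])
  have bij: "from_nat (to_nat i) = (i::'i)" for i by simp
  show "is_BIBD (?f ` X) v k l (to_nat ` I) (\<lambda>j. ?f ` B (from_nat j))"
    using b unfolding is_BIBD_def
    by (auto simp: cardf pc_transfer[of ?f])
  show "?f ` X \<subseteq> ?f ` Y" using sub by auto
  show "finite (?f ` Y)" using fy by auto
  show "card (?f ` Y) = w" using cy cardf by simp
  have pcI: "pair_count (to_nat ` I) (\<lambda>j. ?f ` insert (\<phi> (from_nat j)) (B (from_nat j))) (?f x) (?f y)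
       = pair_count I (\<lambda>i. insert (\<phi> i) (B i)) x y" for x y
    using pc_transfer[of ?f I "\<lambda>i. insert (\<phi> i) (B i)" x y] by simp
  have ci: "card (insert (?f (\<phi> i)) (?f ` B i)) = card (insert (\<phi> i) (B i))" for i
    using cardf[of "insert (\<phi> i) (B i)"] by simp
  show "is_weak_nesting (?f ` Y) w (to_nat ` I) (\<lambda>j. ?f ` B (from_nat j)) k l (\<lambda>j. ?f (\<phi> (from_nat j)))"
    using n unfolding is_weak_nesting_def is_partial_BIBD_def
    using pcI ci by (auto simp: cardf) blast
qed

lemma modeq_cases:
  fixes v v' t :: int
  assumes "v mod (4*t+3) = v' mod (4*t+3)"
  shows "t < 0 \<or> v - v' = 0 \<or> v - v' = 4*t+3 \<or> v - v' = -4*t-3 \<or> v - v' \<ge> 8*t+6 \<or> v - v' \<le> -8*t-6"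
proof (cases "t < 0")
  case False
  then have M: "4*t+3 > 0" by simp
  from assms have "(4*t+3) dvd (v - v')" by (simp add: mod_eq_dvd_iff)
  then obtain k where k: "v - v' = (4*t+3) * k" by (auto simp: dvd_def)
  have "k \<le> -2 \<or> k = -1 \<or> k = 0 \<or> k = 1 \<or> k \<ge> 2" by linarith
  moreover have "k \<le> -2 \<Longrightarrow> (4*t+3)*k \<le> (4*t+3)*(-2)" using M by (intro mult_left_mono) auto
  moreover have "k \<ge> 2 \<Longrightarrow> (4*t+3)*k \<ge> (4*t+3)*2" using M by (intro mult_left_mono) auto
  ultimately show ?thesis using k by (auto simp: algebra_simps)
qed simp

definition H1 :: "int \<Rightarrow> int set" where "H1 t = {h. \<exists>r. 1 \<le> r \<and> r \<le> t \<and> h = 3*r-2}"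
definition H2 :: "int \<Rightarrow> int set" where "H2 t = {h. \<exists>r. 1 \<le> r \<and> r \<le> t-1 \<and> h = 3*r+2}"
definition HX :: "int \<Rightarrow> int set" where "HX t = H1 t \<union> H2 t"
definition gf :: "int \<Rightarrow> int \<Rightarrow> int" where
  "gf t h = (if h mod 3 = 1 then 2*((h+2) div 3) + t - 1 else 4*((h-2) div 3) + t + 4)"

lemma gf_H1 [simp]: "gf t (3*r-2) = 2*r+t-1"
proof -
  have "(3*r-2) mod 3 = 1" by presburger
  moreover have "(3*r-2+2) div 3 = r" by simp
  ultimately show ?thesis unfolding gf_def by simp
qed

lemma gf_H2 [simp]: "gf t (3*r+2) = 4*r+t+4"
proof -
  have "(3*r+2) mod 3 = 2" by presburger
  moreover have "(3*r+2-2) div 3 = r" by simp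
  ultimately show ?thesis unfolding gf_def by simp
qed

datatype cdesc = DV1 | DV2 | DE1 | DE2 | DB0 int | DB1 int
datatype sdesc = SV | SB int

fun cv :: "int \<Rightarrow> cdesc \<Rightarrow> int" where
  "cv t DV1 = -(t+2)" | "cv t DV2 = t+2" | "cv t DE1 = -t" | "cv t DE2 = t"
| "cv t (DB0 h) = gf t h" | "cv t (DB1 h) = gf t h - 2*h"

fun sv :: "int \<Rightarrow> sdesc \<Rightarrow> int" where
  "sv t SV = t+2" | "sv t (SB h) = gf t h - h"

definition DC :: "int \<Rightarrow> cdesc set" where
  "DC t = {DV1, DV2, DE1, DE2} \<union> DB0 ` HX t \<union> DB1 ` HX t"
definition DS :: "int \<Rightarrow> sdesc set" where
  "DS t = {SV} \<union> SB ` HX t"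

lemma DC_cases:
  assumes "d \<in> DC t"
  shows "d = DV1 \<or> d = DV2 \<or> d = DE1 \<or> d = DE2 \<or>
    (\<exists>r. 1 \<le> r \<and> r \<le> t \<and> d = DB0 (3*r-2)) \<or> (\<exists>r. 1 \<le> r \<and> r \<le> t-1 \<and> d = DB0 (3*r+2)) \<or>
    (\<exists>r. 1 \<le> r \<and> r \<le> t \<and> d = DB1 (3*r-2)) \<or> (\<exists>r. 1 \<le> r \<and> r \<le> t-1 \<and> d = DB1 (3*r+2))"
  using assms unfolding DC_def HX_def H1_def H2_def by blast

lemma cv_simps2:
  "cv t DV1 = -t-2" "cv t DV2 = t+2" "cv t DE1 = -t" "cv t DE2 = t"
  "cv t (DB0 (3*r-2)) = 2*r+t-1" "cv t (DB0 (3*r+2)) = 4*r+t+4"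
  "cv t (DB1 (3*r-2)) = t+3-4*r" "cv t (DB1 (3*r+2)) = t-2*r"
  apply (simp_all only: cv.simps gf_H1 gf_H2)
  apply ((simp_all add: algebra_simps)?)
  done

lemma cl1: "\<lbrakk>2 \<le> t; cv t DV1 mod (4*t+3) = cv t DV2 mod (4*t+3)\<rbrakk> \<Longrightarrow> DV1 = DV2"
  by (simp only: cv_simps2 cdesc.inject cdesc.distinct) (drule modeq_cases, elim disjE; (linarith | presburger))
lemma cl2: "\<lbrakk>2 \<le> t; cv t DV1 mod (4*t+3) = cv t DE1 mod (4*t+3)\<rbrakk> \<Longrightarrow> DV1 = DE1"
  by (simp only: cv_simps2 cdesc.inject cdesc.distinct) (drule modeq_cases, elim disjE; (linarith | presburger))
lemma cl3: "\<lbrakk>2 \<le> t; cv t DV1 mod (4*t+3) = cv t DE2 mod (4*t+3)\<rbrakk> \<Longrightarrow> DV1 = DE2"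
  by (simp only: cv_simps2 cdesc.inject cdesc.distinct) (drule modeq_cases, elim disjE; (linarith | presburger))
lemma cl4: "\<lbrakk>2 \<le> t; 1 \<le> s; s \<le> t; cv t DV1 mod (4*t+3) = cv t (DB0 (3*s-2)) mod (4*t+3)\<rbrakk> \<Longrightarrow> DV1 = (DB0 (3*s-2))"
  by (simp only: cv_simps2 cdesc.inject cdesc.distinct) (drule modeq_cases, elim disjE; (linarith | presburger))
lemma cl5: "\<lbrakk>2 \<le> t; 1 \<le> s; s \<le> t-1; cv t DV1 mod (4*t+3) = cv t (DB0 (3*s+2)) mod (4*t+3)\<rbrakk> \<Longrightarrow> DV1 = (DB0 (3*s+2))"
  by (simp only: cv_simps2 cdesc.inject cdesc.distinct) (drule modeq_cases, elim disjE; (linarith | presburger))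
lemma cl6: "\<lbrakk>2 \<le> t; 1 \<le> s; s \<le> t; cv t DV1 mod (4*t+3) = cv t (DB1 (3*s-2)) mod (4*t+3)\<rbrakk> \<Longrightarrow> DV1 = (DB1 (3*s-2))"
  by (simp only: cv_simps2 cdesc.inject cdesc.distinct) (drule modeq_cases, elim disjE; (linarith | presburger))
lemma cl7: "\<lbrakk>2 \<le> t; 1 \<le> s; s \<le> t-1; cv t DV1 mod (4*t+3) = cv t (DB1 (3*s+2)) mod (4*t+3)\<rbrakk> \<Longrightarrow> DV1 = (DB1 (3*s+2))"
  by (simp only: cv_simps2 cdesc.inject cdesc.distinct) (drule modeq_cases, elim disjE; (linarith | presburger))
lemma cl8: "\<lbrakk>2 \<le> t; cv t DV2 mod (4*t+3) = cv t DV1 mod (4*t+3)\<rbrakk> \<Longrightarrow> DV2 = DV1"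
  by (simp only: cv_simps2 cdesc.inject cdesc.distinct) (drule modeq_cases, elim disjE; (linarith | presburger))
lemma cl9: "\<lbrakk>2 \<le> t; cv t DV2 mod (4*t+3) = cv t DE1 mod (4*t+3)\<rbrakk> \<Longrightarrow> DV2 = DE1"
  by (simp only: cv_simps2 cdesc.inject cdesc.distinct) (drule modeq_cases, elim disjE; (linarith | presburger))
lemma cl10: "\<lbrakk>2 \<le> t; cv t DV2 mod (4*t+3) = cv t DE2 mod (4*t+3)\<rbrakk> \<Longrightarrow> DV2 = DE2"
  by (simp only: cv_simps2 cdesc.inject cdesc.distinct) (drule modeq_cases, elim disjE; (linarith | presburger))
lemma cl11: "\<lbrakk>2 \<le> t; 1 \<le> s; s \<le> t; cv t DV2 mod (4*t+3) = cv t (DB0 (3*s-2)) mod (4*t+3)\<rbrakk> \<Longrightarrow> DV2 = (DB0 (3*s-2))"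
  by (simp only: cv_simps2 cdesc.inject cdesc.distinct) (drule modeq_cases, elim disjE; (linarith | presburger))
lemma cl12: "\<lbrakk>2 \<le> t; 1 \<le> s; s \<le> t-1; cv t DV2 mod (4*t+3) = cv t (DB0 (3*s+2)) mod (4*t+3)\<rbrakk> \<Longrightarrow> DV2 = (DB0 (3*s+2))"
  by (simp only: cv_simps2 cdesc.inject cdesc.distinct) (drule modeq_cases, elim disjE; (linarith | presburger))
lemma cl13: "\<lbrakk>2 \<le> t; 1 \<le> s; s \<le> t; cv t DV2 mod (4*t+3) = cv t (DB1 (3*s-2)) mod (4*t+3)\<rbrakk> \<Longrightarrow> DV2 = (DB1 (3*s-2))"
  by (simp only: cv_simps2 cdesc.inject cdesc.distinct) (drule modeq_cases, elim disjE; (linarith | presburger))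
lemma cl14: "\<lbrakk>2 \<le> t; 1 \<le> s; s \<le> t-1; cv t DV2 mod (4*t+3) = cv t (DB1 (3*s+2)) mod (4*t+3)\<rbrakk> \<Longrightarrow> DV2 = (DB1 (3*s+2))"
  by (simp only: cv_simps2 cdesc.inject cdesc.distinct) (drule modeq_cases, elim disjE; (linarith | presburger))
lemma cl15: "\<lbrakk>2 \<le> t; cv t DE1 mod (4*t+3) = cv t DV1 mod (4*t+3)\<rbrakk> \<Longrightarrow> DE1 = DV1"
  by (simp only: cv_simps2 cdesc.inject cdesc.distinct) (drule modeq_cases, elim disjE; (linarith | presburger))
lemma cl16: "\<lbrakk>2 \<le> t; cv t DE1 mod (4*t+3) = cv t DV2 mod (4*t+3)\<rbrakk> \<Longrightarrow> DE1 = DV2"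
  by (simp only: cv_simps2 cdesc.inject cdesc.distinct) (drule modeq_cases, elim disjE; (linarith | presburger))
lemma cl17: "\<lbrakk>2 \<le> t; cv t DE1 mod (4*t+3) = cv t DE2 mod (4*t+3)\<rbrakk> \<Longrightarrow> DE1 = DE2"
  by (simp only: cv_simps2 cdesc.inject cdesc.distinct) (drule modeq_cases, elim disjE; (linarith | presburger))
lemma cl18: "\<lbrakk>2 \<le> t; 1 \<le> s; s \<le> t; cv t DE1 mod (4*t+3) = cv t (DB0 (3*s-2)) mod (4*t+3)\<rbrakk> \<Longrightarrow> DE1 = (DB0 (3*s-2))"
  by (simp only: cv_simps2 cdesc.inject cdesc.distinct) (drule modeq_cases, elim disjE; (linarith | presburger))
lemma cl19: "\<lbrakk>2 \<le> t; 1 \<le> s; s \<le> t-1; cv t DE1 mod (4*t+3) = cv t (DB0 (3*s+2)) mod (4*t+3)\<rbrakk> \<Longrightarrow> DE1 = (DB0 (3*s+2))"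
  by (simp only: cv_simps2 cdesc.inject cdesc.distinct) (drule modeq_cases, elim disjE; (linarith | presburger))
lemma cl20: "\<lbrakk>2 \<le> t; 1 \<le> s; s \<le> t; cv t DE1 mod (4*t+3) = cv t (DB1 (3*s-2)) mod (4*t+3)\<rbrakk> \<Longrightarrow> DE1 = (DB1 (3*s-2))"
  by (simp only: cv_simps2 cdesc.inject cdesc.distinct) (drule modeq_cases, elim disjE; (linarith | presburger))
lemma cl21: "\<lbrakk>2 \<le> t; 1 \<le> s; s \<le> t-1; cv t DE1 mod (4*t+3) = cv t (DB1 (3*s+2)) mod (4*t+3)\<rbrakk> \<Longrightarrow> DE1 = (DB1 (3*s+2))"
  by (simp only: cv_simps2 cdesc.inject cdesc.distinct) (drule modeq_cases, elim disjE; (linarith | presburger))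
lemma cl22: "\<lbrakk>2 \<le> t; cv t DE2 mod (4*t+3) = cv t DV1 mod (4*t+3)\<rbrakk> \<Longrightarrow> DE2 = DV1"
  by (simp only: cv_simps2 cdesc.inject cdesc.distinct) (drule modeq_cases, elim disjE; (linarith | presburger))
lemma cl23: "\<lbrakk>2 \<le> t; cv t DE2 mod (4*t+3) = cv t DV2 mod (4*t+3)\<rbrakk> \<Longrightarrow> DE2 = DV2"
  by (simp only: cv_simps2 cdesc.inject cdesc.distinct) (drule modeq_cases, elim disjE; (linarith | presburger))
lemma cl24: "\<lbrakk>2 \<le> t; cv t DE2 mod (4*t+3) = cv t DE1 mod (4*t+3)\<rbrakk> \<Longrightarrow> DE2 = DE1"
  by (simp only: cv_simps2 cdesc.inject cdesc.distinct) (drule modeq_cases, elim disjE; (linarith | presburger))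
lemma cl25: "\<lbrakk>2 \<le> t; 1 \<le> s; s \<le> t; cv t DE2 mod (4*t+3) = cv t (DB0 (3*s-2)) mod (4*t+3)\<rbrakk> \<Longrightarrow> DE2 = (DB0 (3*s-2))"
  by (simp only: cv_simps2 cdesc.inject cdesc.distinct) (drule modeq_cases, elim disjE; (linarith | presburger))
lemma cl26: "\<lbrakk>2 \<le> t; 1 \<le> s; s \<le> t-1; cv t DE2 mod (4*t+3) = cv t (DB0 (3*s+2)) mod (4*t+3)\<rbrakk> \<Longrightarrow> DE2 = (DB0 (3*s+2))"
  by (simp only: cv_simps2 cdesc.inject cdesc.distinct) (drule modeq_cases, elim disjE; (linarith | presburger))
lemma cl27: "\<lbrakk>2 \<le> t; 1 \<le> s; s \<le> t; cv t DE2 mod (4*t+3) = cv t (DB1 (3*s-2)) mod (4*t+3)\<rbrakk> \<Longrightarrow> DE2 = (DB1 (3*s-2))"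
  by (simp only: cv_simps2 cdesc.inject cdesc.distinct) (drule modeq_cases, elim disjE; (linarith | presburger))
lemma cl28: "\<lbrakk>2 \<le> t; 1 \<le> s; s \<le> t-1; cv t DE2 mod (4*t+3) = cv t (DB1 (3*s+2)) mod (4*t+3)\<rbrakk> \<Longrightarrow> DE2 = (DB1 (3*s+2))"
  by (simp only: cv_simps2 cdesc.inject cdesc.distinct) (drule modeq_cases, elim disjE; (linarith | presburger))
lemma cl29: "\<lbrakk>2 \<le> t; 1 \<le> r; r \<le> t; cv t (DB0 (3*r-2)) mod (4*t+3) = cv t DV1 mod (4*t+3)\<rbrakk> \<Longrightarrow> (DB0 (3*r-2)) = DV1"
  by (simp only: cv_simps2 cdesc.inject cdesc.distinct) (drule modeq_cases, elim disjE; (linarith | presburger))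
lemma cl30: "\<lbrakk>2 \<le> t; 1 \<le> r; r \<le> t; cv t (DB0 (3*r-2)) mod (4*t+3) = cv t DV2 mod (4*t+3)\<rbrakk> \<Longrightarrow> (DB0 (3*r-2)) = DV2"
  by (simp only: cv_simps2 cdesc.inject cdesc.distinct) (drule modeq_cases, elim disjE; (linarith | presburger))
lemma cl31: "\<lbrakk>2 \<le> t; 1 \<le> r; r \<le> t; cv t (DB0 (3*r-2)) mod (4*t+3) = cv t DE1 mod (4*t+3)\<rbrakk> \<Longrightarrow> (DB0 (3*r-2)) = DE1"
  by (simp only: cv_simps2 cdesc.inject cdesc.distinct) (drule modeq_cases, elim disjE; (linarith | presburger))
lemma cl32: "\<lbrakk>2 \<le> t; 1 \<le> r; r \<le> t; cv t (DB0 (3*r-2)) mod (4*t+3) = cv t DE2 mod (4*t+3)\<rbrakk> \<Longrightarrow> (DB0 (3*r-2)) = DE2"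
  by (simp only: cv_simps2 cdesc.inject cdesc.distinct) (drule modeq_cases, elim disjE; (linarith | presburger))
lemma cl33: "\<lbrakk>2 \<le> t; 1 \<le> r; r \<le> t; 1 \<le> s; s \<le> t; cv t (DB0 (3*r-2)) mod (4*t+3) = cv t (DB0 (3*s-2)) mod (4*t+3)\<rbrakk> \<Longrightarrow> (DB0 (3*r-2)) = (DB0 (3*s-2))"
  by (simp only: cv_simps2 cdesc.inject cdesc.distinct) (drule modeq_cases, elim disjE; (linarith | presburger))
lemma cl34: "\<lbrakk>2 \<le> t; 1 \<le> r; r \<le> t; 1 \<le> s; s \<le> t-1; cv t (DB0 (3*r-2)) mod (4*t+3) = cv t (DB0 (3*s+2)) mod (4*t+3)\<rbrakk> \<Longrightarrow> (DB0 (3*r-2)) = (DB0 (3*s+2))"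
  by (simp only: cv_simps2 cdesc.inject cdesc.distinct) (drule modeq_cases, elim disjE; (linarith | presburger))
lemma cl35: "\<lbrakk>2 \<le> t; 1 \<le> r; r \<le> t; 1 \<le> s; s \<le> t; cv t (DB0 (3*r-2)) mod (4*t+3) = cv t (DB1 (3*s-2)) mod (4*t+3)\<rbrakk> \<Longrightarrow> (DB0 (3*r-2)) = (DB1 (3*s-2))"
  by (simp only: cv_simps2 cdesc.inject cdesc.distinct) (drule modeq_cases, elim disjE; (linarith | presburger))
lemma cl36: "\<lbrakk>2 \<le> t; 1 \<le> r; r \<le> t; 1 \<le> s; s \<le> t-1; cv t (DB0 (3*r-2)) mod (4*t+3) = cv t (DB1 (3*s+2)) mod (4*t+3)\<rbrakk> \<Longrightarrow> (DB0 (3*r-2)) = (DB1 (3*s+2))"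
  by (simp only: cv_simps2 cdesc.inject cdesc.distinct) (drule modeq_cases, elim disjE; (linarith | presburger))
lemma cl37: "\<lbrakk>2 \<le> t; 1 \<le> r; r \<le> t-1; cv t (DB0 (3*r+2)) mod (4*t+3) = cv t DV1 mod (4*t+3)\<rbrakk> \<Longrightarrow> (DB0 (3*r+2)) = DV1"
  by (simp only: cv_simps2 cdesc.inject cdesc.distinct) (drule modeq_cases, elim disjE; (linarith | presburger))
lemma cl38: "\<lbrakk>2 \<le> t; 1 \<le> r; r \<le> t-1; cv t (DB0 (3*r+2)) mod (4*t+3) = cv t DV2 mod (4*t+3)\<rbrakk> \<Longrightarrow> (DB0 (3*r+2)) = DV2"
  by (simp only: cv_simps2 cdesc.inject cdesc.distinct) (drule modeq_cases, elim disjE; (linarith | presburger))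
lemma cl39: "\<lbrakk>2 \<le> t; 1 \<le> r; r \<le> t-1; cv t (DB0 (3*r+2)) mod (4*t+3) = cv t DE1 mod (4*t+3)\<rbrakk> \<Longrightarrow> (DB0 (3*r+2)) = DE1"
  by (simp only: cv_simps2 cdesc.inject cdesc.distinct) (drule modeq_cases, elim disjE; (linarith | presburger))
lemma cl40: "\<lbrakk>2 \<le> t; 1 \<le> r; r \<le> t-1; cv t (DB0 (3*r+2)) mod (4*t+3) = cv t DE2 mod (4*t+3)\<rbrakk> \<Longrightarrow> (DB0 (3*r+2)) = DE2"
  by (simp only: cv_simps2 cdesc.inject cdesc.distinct) (drule modeq_cases, elim disjE; (linarith | presburger))
lemma cl41: "\<lbrakk>2 \<le> t; 1 \<le> r; r \<le> t-1; 1 \<le> s; s \<le> t; cv t (DB0 (3*r+2)) mod (4*t+3) = cv t (DB0 (3*s-2)) mod (4*t+3)\<rbrakk> \<Longrightarrow> (DB0 (3*r+2)) = (DB0 (3*s-2))"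
  by (simp only: cv_simps2 cdesc.inject cdesc.distinct) (drule modeq_cases, elim disjE; (linarith | presburger))
lemma cl42: "\<lbrakk>2 \<le> t; 1 \<le> r; r \<le> t-1; 1 \<le> s; s \<le> t-1; cv t (DB0 (3*r+2)) mod (4*t+3) = cv t (DB0 (3*s+2)) mod (4*t+3)\<rbrakk> \<Longrightarrow> (DB0 (3*r+2)) = (DB0 (3*s+2))"
  by (simp only: cv_simps2 cdesc.inject cdesc.distinct) (drule modeq_cases, elim disjE; (linarith | presburger))
lemma cl43: "\<lbrakk>2 \<le> t; 1 \<le> r; r \<le> t-1; 1 \<le> s; s \<le> t; cv t (DB0 (3*r+2)) mod (4*t+3) = cv t (DB1 (3*s-2)) mod (4*t+3)\<rbrakk> \<Longrightarrow> (DB0 (3*r+2)) = (DB1 (3*s-2))"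
  by (simp only: cv_simps2 cdesc.inject cdesc.distinct) (drule modeq_cases, elim disjE; (linarith | presburger))
lemma cl44: "\<lbrakk>2 \<le> t; 1 \<le> r; r \<le> t-1; 1 \<le> s; s \<le> t-1; cv t (DB0 (3*r+2)) mod (4*t+3) = cv t (DB1 (3*s+2)) mod (4*t+3)\<rbrakk> \<Longrightarrow> (DB0 (3*r+2)) = (DB1 (3*s+2))"
  by (simp only: cv_simps2 cdesc.inject cdesc.distinct) (drule modeq_cases, elim disjE; (linarith | presburger))
lemma cl45: "\<lbrakk>2 \<le> t; 1 \<le> r; r \<le> t; cv t (DB1 (3*r-2)) mod (4*t+3) = cv t DV1 mod (4*t+3)\<rbrakk> \<Longrightarrow> (DB1 (3*r-2)) = DV1"
  by (simp only: cv_simps2 cdesc.inject cdesc.distinct) (drule modeq_cases, elim disjE; (linarith | presburger))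
lemma cl46: "\<lbrakk>2 \<le> t; 1 \<le> r; r \<le> t; cv t (DB1 (3*r-2)) mod (4*t+3) = cv t DV2 mod (4*t+3)\<rbrakk> \<Longrightarrow> (DB1 (3*r-2)) = DV2"
  by (simp only: cv_simps2 cdesc.inject cdesc.distinct) (drule modeq_cases, elim disjE; (linarith | presburger))
lemma cl47: "\<lbrakk>2 \<le> t; 1 \<le> r; r \<le> t; cv t (DB1 (3*r-2)) mod (4*t+3) = cv t DE1 mod (4*t+3)\<rbrakk> \<Longrightarrow> (DB1 (3*r-2)) = DE1"
  by (simp only: cv_simps2 cdesc.inject cdesc.distinct) (drule modeq_cases, elim disjE; (linarith | presburger))
lemma cl48: "\<lbrakk>2 \<le> t; 1 \<le> r; r \<le> t; cv t (DB1 (3*r-2)) mod (4*t+3) = cv t DE2 mod (4*t+3)\<rbrakk> \<Longrightarrow> (DB1 (3*r-2)) = DE2"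
  by (simp only: cv_simps2 cdesc.inject cdesc.distinct) (drule modeq_cases, elim disjE; (linarith | presburger))
lemma cl49: "\<lbrakk>2 \<le> t; 1 \<le> r; r \<le> t; 1 \<le> s; s \<le> t; cv t (DB1 (3*r-2)) mod (4*t+3) = cv t (DB0 (3*s-2)) mod (4*t+3)\<rbrakk> \<Longrightarrow> (DB1 (3*r-2)) = (DB0 (3*s-2))"
  by (simp only: cv_simps2 cdesc.inject cdesc.distinct) (drule modeq_cases, elim disjE; (linarith | presburger))
lemma cl50: "\<lbrakk>2 \<le> t; 1 \<le> r; r \<le> t; 1 \<le> s; s \<le> t-1; cv t (DB1 (3*r-2)) mod (4*t+3) = cv t (DB0 (3*s+2)) mod (4*t+3)\<rbrakk> \<Longrightarrow> (DB1 (3*r-2)) = (DB0 (3*s+2))"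
  by (simp only: cv_simps2 cdesc.inject cdesc.distinct) (drule modeq_cases, elim disjE; (linarith | presburger))
lemma cl51: "\<lbrakk>2 \<le> t; 1 \<le> r; r \<le> t; 1 \<le> s; s \<le> t; cv t (DB1 (3*r-2)) mod (4*t+3) = cv t (DB1 (3*s-2)) mod (4*t+3)\<rbrakk> \<Longrightarrow> (DB1 (3*r-2)) = (DB1 (3*s-2))"
  by (simp only: cv_simps2 cdesc.inject cdesc.distinct) (drule modeq_cases, elim disjE; (linarith | presburger))
lemma cl52: "\<lbrakk>2 \<le> t; 1 \<le> r; r \<le> t; 1 \<le> s; s \<le> t-1; cv t (DB1 (3*r-2)) mod (4*t+3) = cv t (DB1 (3*s+2)) mod (4*t+3)\<rbrakk> \<Longrightarrow> (DB1 (3*r-2)) = (DB1 (3*s+2))"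
  by (simp only: cv_simps2 cdesc.inject cdesc.distinct) (drule modeq_cases, elim disjE; (linarith | presburger))
lemma cl53: "\<lbrakk>2 \<le> t; 1 \<le> r; r \<le> t-1; cv t (DB1 (3*r+2)) mod (4*t+3) = cv t DV1 mod (4*t+3)\<rbrakk> \<Longrightarrow> (DB1 (3*r+2)) = DV1"
  by (simp only: cv_simps2 cdesc.inject cdesc.distinct) (drule modeq_cases, elim disjE; (linarith | presburger))
lemma cl54: "\<lbrakk>2 \<le> t; 1 \<le> r; r \<le> t-1; cv t (DB1 (3*r+2)) mod (4*t+3) = cv t DV2 mod (4*t+3)\<rbrakk> \<Longrightarrow> (DB1 (3*r+2)) = DV2"
  by (simp only: cv_simps2 cdesc.inject cdesc.distinct) (drule modeq_cases, elim disjE; (linarith | presburger))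
lemma cl55: "\<lbrakk>2 \<le> t; 1 \<le> r; r \<le> t-1; cv t (DB1 (3*r+2)) mod (4*t+3) = cv t DE1 mod (4*t+3)\<rbrakk> \<Longrightarrow> (DB1 (3*r+2)) = DE1"
  by (simp only: cv_simps2 cdesc.inject cdesc.distinct) (drule modeq_cases, elim disjE; (linarith | presburger))
lemma cl56: "\<lbrakk>2 \<le> t; 1 \<le> r; r \<le> t-1; cv t (DB1 (3*r+2)) mod (4*t+3) = cv t DE2 mod (4*t+3)\<rbrakk> \<Longrightarrow> (DB1 (3*r+2)) = DE2"
  by (simp only: cv_simps2 cdesc.inject cdesc.distinct) (drule modeq_cases, elim disjE; (linarith | presburger))
lemma cl57: "\<lbrakk>2 \<le> t; 1 \<le> r; r \<le> t-1; 1 \<le> s; s \<le> t; cv t (DB1 (3*r+2)) mod (4*t+3) = cv t (DB0 (3*s-2)) mod (4*t+3)\<rbrakk> \<Longrightarrow> (DB1 (3*r+2)) = (DB0 (3*s-2))"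
  by (simp only: cv_simps2 cdesc.inject cdesc.distinct) (drule modeq_cases, elim disjE; (linarith | presburger))
lemma cl58: "\<lbrakk>2 \<le> t; 1 \<le> r; r \<le> t-1; 1 \<le> s; s \<le> t-1; cv t (DB1 (3*r+2)) mod (4*t+3) = cv t (DB0 (3*s+2)) mod (4*t+3)\<rbrakk> \<Longrightarrow> (DB1 (3*r+2)) = (DB0 (3*s+2))"
  by (simp only: cv_simps2 cdesc.inject cdesc.distinct) (drule modeq_cases, elim disjE; (linarith | presburger))
lemma cl59: "\<lbrakk>2 \<le> t; 1 \<le> r; r \<le> t-1; 1 \<le> s; s \<le> t; cv t (DB1 (3*r+2)) mod (4*t+3) = cv t (DB1 (3*s-2)) mod (4*t+3)\<rbrakk> \<Longrightarrow> (DB1 (3*r+2)) = (DB1 (3*s-2))"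
  by (simp only: cv_simps2 cdesc.inject cdesc.distinct) (drule modeq_cases, elim disjE; (linarith | presburger))
lemma cl60: "\<lbrakk>2 \<le> t; 1 \<le> r; r \<le> t-1; 1 \<le> s; s \<le> t-1; cv t (DB1 (3*r+2)) mod (4*t+3) = cv t (DB1 (3*s+2)) mod (4*t+3)\<rbrakk> \<Longrightarrow> (DB1 (3*r+2)) = (DB1 (3*s+2))"
  by (simp only: cv_simps2 cdesc.inject cdesc.distinct) (drule modeq_cases, elim disjE; (linarith | presburger))
lemmas clems = cl1 cl2 cl3 cl4 cl5 cl6 cl7 cl8 cl9 cl10 cl11 cl12 cl13 cl14 cl15 cl16 cl17 cl18 cl19 cl20 cl21 cl22 cl23 cl24 cl25 cl26 cl27 cl28 cl29 cl30 cl31 cl32 cl33 cl34 cl35 cl36 cl37 cl38 cl39 cl40 cl41 cl42 cl43 cl44 cl45 cl46 cl47 cl48 cl49 cl50 cl51 cl52 cl53 cl54 cl55 cl56 cl57 cl58 cl59 cl60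

lemma cinj:
  "t \<ge> 2 \<Longrightarrow> d \<in> DC t \<Longrightarrow> d' \<in> DC t \<Longrightarrow> cv t d mod (4*t+3) = cv t d' mod (4*t+3) \<Longrightarrow> d = d'"
proof -
  assume a: "t \<ge> 2" "d \<in> DC t" "d' \<in> DC t" "cv t d mod (4*t+3) = cv t d' mod (4*t+3)"
  show "d = d'"
    using DC_cases[OF a(2)] DC_cases[OF a(3)] a(1,4)
    apply (elim disjE exE conjE)
    apply (simp_all only:)
    apply (rule clems; assumption)+
    done
qed

lemma DS_cases:
  assumes "d \<in> DS t"
  shows "d = SV \<or> (\<exists>r. 1 \<le> r \<and> r \<le> t \<and> d = SB (3*r-2)) \<or> (\<exists>r. 1 \<le> r \<and> r \<le> t-1 \<and> d = SB (3*r+2))"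
  using assms unfolding DS_def HX_def H1_def H2_def by blast

lemma sv_simps2: "sv t SV = t+2" "sv t (SB (3*r-2)) = t+1-r" "sv t (SB (3*r+2)) = t+2+r"
  apply (simp_all only: sv.simps gf_H1 gf_H2)
  apply ((simp_all add: algebra_simps)?)
  done

lemma sv_range: "t \<ge> 2 \<Longrightarrow> d \<in> DS t \<Longrightarrow> 1 \<le> sv t d \<and> sv t d \<le> 2*t+1"
  by (drule DS_cases) (auto simp: sv_simps2)

lemma sv_inj: "t \<ge> 2 \<Longrightarrow> d \<in> DS t \<Longrightarrow> d' \<in> DS t \<Longrightarrow> sv t d = sv t d' \<Longrightarrow> d = d'"
proof -
  assume a: "t \<ge> 2" "d \<in> DS t" "d' \<in> DS t" "sv t d = sv t d'"
  show "d = d'"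
    using DS_cases[OF a(2)] DS_cases[OF a(3)] a(1,4)
    by (elim disjE exE conjE; simp only: sv_simps2 sdesc.inject sdesc.distinct; linarith)
qed

lemma sign_inj:
  fixes t v v' \<sigma> \<sigma>' :: int
  assumes "t \<ge> 2" "1 \<le> v" "v \<le> 2*t+1" "1 \<le> v'" "v' \<le> 2*t+1" "\<sigma> = 1 \<or> \<sigma> = -1" "\<sigma>' = 1 \<or> \<sigma>' = -1"
    and "(\<sigma> * v) mod (4*t+3) = (\<sigma>' * v') mod (4*t+3)"
  shows "\<sigma> = \<sigma>' \<and> v = v'"
  using assms(6,7) modeq_cases[OF assms(8)] assms(1-5)
  by (elim disjE; simp; linarith)

lemma sinj:
  assumes "t \<ge> 2" "d \<in> DS t" "d' \<in> DS t" "\<sigma> = 1 \<or> \<sigma> = -1" "\<sigma>' = 1 \<or> \<sigma>' = -1"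
    and "(\<sigma> * sv t d) mod (4*t+3) = (\<sigma>' * sv t d') mod (4*t+3)"
  shows "d = d' \<and> \<sigma> = \<sigma>'"
  using sign_inj[OF assms(1) _ _ _ _ assms(4,5,6)] sv_range[OF assms(1,2)] sv_range[OF assms(1,3)]
    sv_inj[OF assms(1,2,3)] by auto

definition Xs :: "int \<Rightarrow> (int \<times> int) set" where
  "Xs t = {0..<4*t+3} \<times> {0..<3} \<union> {(0,3)}"
definition Is :: "int \<Rightarrow> (int \<times> int \<times> int) set" where
  "Is t = {0..<4*t+3} \<times> {0..<4*t+3} \<times> {0..<3} \<union> {0..<4*t+3} \<times> {4*t+3} \<times> {0}"
definition blk :: "int \<Rightarrow> int \<times> int \<times> int \<Rightarrow> (int \<times> int) set" where
  "blk t i = (case i of (x,h,j) \<Rightarrow>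
     if h = 0 then {(0,3),(x,j),(x,(j+1) mod 3)}
     else if h = 4*t+3 then {(x,0),(x,1),(x,2)}
     else {(x,j),((x+2*h) mod (4*t+3), j),((x+h) mod (4*t+3),(j+1) mod 3)})"
definition ph :: "int \<Rightarrow> int \<times> int \<times> int \<Rightarrow> int \<times> int" where
  "ph t i = (case i of (x,h,j) \<Rightarrow>
     if h = 0 then ((x+t) mod (4*t+3), (j+2) mod 3)
     else if h = 4*t+3 then ((x+t+2) mod (4*t+3), 0)
     else if h \<in> HX t then ((x + gf t h) mod (4*t+3), (j+1) mod 3)
     else (h,4))"
definition Hn :: "int \<Rightarrow> int set" where "Hn t = {1..<4*t+3} - HX t"
definition Ys :: "int \<Rightarrow> (int \<times> int) set" where "Ys t = Xs t \<union> (\<lambda>h. (h,4)) ` Hn t"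

lemma blk_E: "blk t (x,0,j) = {(0,3),(x,j),(x,(j+1) mod 3)}"
  unfolding blk_def by simp
lemma blk_V: "t \<ge> 0 \<Longrightarrow> blk t (x,4*t+3,j) = {(x,0),(x,1),(x,2)}"
  unfolding blk_def by simp
lemma blk_B: "h \<noteq> 0 \<Longrightarrow> h \<noteq> 4*t+3 \<Longrightarrow>
   blk t (x,h,j) = {(x,j),((x+2*h) mod (4*t+3), j),((x+h) mod (4*t+3),(j+1) mod 3)}"
  unfolding blk_def by simp
lemma ph_E: "ph t (x,0,j) = ((x+t) mod (4*t+3), (j+2) mod 3)"
  unfolding ph_def by simp
lemma ph_V: "t \<ge> 0 \<Longrightarrow> ph t (x,4*t+3,j) = ((x+t+2) mod (4*t+3), 0)"
  unfolding ph_def by simp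
lemma ph_B: "h \<noteq> 0 \<Longrightarrow> h \<noteq> 4*t+3 \<Longrightarrow> h \<in> HX t \<Longrightarrow> ph t (x,h,j) = ((x + gf t h) mod (4*t+3), (j+1) mod 3)"
  unfolding ph_def by simp
lemma ph_N: "h \<noteq> 0 \<Longrightarrow> h \<noteq> 4*t+3 \<Longrightarrow> h \<notin> HX t \<Longrightarrow> ph t (x,h,j) = (h,4)"
  unfolding ph_def by simp

lemma Is_iff: "t \<ge> 0 \<Longrightarrow> (x,h,j) \<in> Is t \<longleftrightarrow> 0 \<le> x \<and> x < 4*t+3 \<and>
   ((0 \<le> h \<and> h < 4*t+3 \<and> 0 \<le> j \<and> j < 3) \<or> (h = 4*t+3 \<and> j = 0))"
  unfolding Is_def by auto

lemma lv: "0 \<le> (j::int) \<Longrightarrow> j < 3 \<Longrightarrow> j = 0 \<or> j = 1 \<or> j = 2" by presburger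

lemma Xs_iff: "(a,k) \<in> Xs t \<longleftrightarrow> (0 \<le> a \<and> a < 4*t+3 \<and> 0 \<le> k \<and> k < 3) \<or> (a = 0 \<and> k = 3)"
  unfolding Xs_def by auto

lemma half_spec:
  fixes a b t :: int
  assumes "t \<ge> 0" "0 \<le> b" "b < 4*t+3"
  shows "(a + 2 * ((b - a)*(2*t+2) mod (4*t+3))) mod (4*t+3) = b"
proof -
  have "(a + 2 * ((b - a)*(2*t+2) mod (4*t+3))) mod (4*t+3) = (a + 2 * ((b - a)*(2*t+2))) mod (4*t+3)"
    by (metis mod_add_right_eq mod_mult_right_eq)
  also have "a + 2 * ((b - a)*(2*t+2)) = b + (b - a) * (4*t+3)" by (simp add: algebra_simps)
  also have "(b + (b - a) * (4*t+3)) mod (4*t+3) = b mod (4*t+3)" by simp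
  also have "\<dots> = b" using assms by simp
  finally show ?thesis .
qed

lemma half_eq:
  fixes a b h t :: int
  assumes "t \<ge> 0" "0 \<le> h" "h < 4*t+3" "(a + 2*h) mod (4*t+3) = b" "0 \<le> b" "b < 4*t+3"
  shows "h = (b - a)*(2*t+2) mod (4*t+3)"
proof -
  have "(a + 2*h) mod (4*t+3) = b mod (4*t+3)" using assms by simp
  then have "(4*t+3) dvd (a + 2*h - b)" by (simp add: mod_eq_dvd_iff)
  then obtain k where k: "a + 2*h - b = (4*t+3) * k" by (auto simp: dvd_def)
  have e: "h - (b - a)*(2*t+2) = (a + 2*h - b)*(2*t+2) - (4*t+3)*h" by algebra
  have "h - (b - a)*(2*t+2) = (4*t+3) * (k*(2*t+2) - h)"
    unfolding e k by algebra
  then have "h mod (4*t+3) = (b - a)*(2*t+2) mod (4*t+3)"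
    by (simp add: mod_eq_dvd_iff)
  then show ?thesis using assms by simp
qed

lemma lin_spec:
  fixes a b t :: int
  assumes "t \<ge> 0" "0 \<le> b" "b < 4*t+3"
  shows "(a + (b - a) mod (4*t+3)) mod (4*t+3) = b"
  using assms by (simp add: mod_simps)

lemma lin_eq:
  fixes a b h t :: int
  assumes "t \<ge> 0" "0 \<le> h" "h < 4*t+3" "(a + h) mod (4*t+3) = b"
  shows "h = (b - a) mod (4*t+3)"
proof -
  have "(b - a) mod (4*t+3) = ((a + h) mod (4*t+3) - a) mod (4*t+3)" using assms by simp
  also have "\<dots> = h mod (4*t+3)" by (simp add: mod_simps)
  also have "\<dots> = h" using assms by simp
  finally show ?thesis by simp
qed

lemma two_eq:
  fixes a b h x t :: int
  assumes "t \<ge> 0" "0 \<le> h" "h < 4*t+3" "0 \<le> x" "x < 4*t+3"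
    "(x + 2*h) mod (4*t+3) = a" "(x + h) mod (4*t+3) = b"
  shows "h = (a - b) mod (4*t+3) \<and> x = (2*b - a) mod (4*t+3)"
proof
  have "(a - b) mod (4*t+3) = ((x + 2*h) mod (4*t+3) - (x + h) mod (4*t+3)) mod (4*t+3)" using assms by simp
  also have "\<dots> = ((x + 2*h) - (x + h)) mod (4*t+3)" by (simp add: mod_simps)
  also have "\<dots> = h" using assms by simp
  finally show "h = (a - b) mod (4*t+3)" by simp
  have "(2*b - a) mod (4*t+3) = (2*((x + h) mod (4*t+3)) - (x + 2*h) mod (4*t+3)) mod (4*t+3)" using assms by simp
  also have "\<dots> = (2*(x + h) - (x + 2*h)) mod (4*t+3)"
    by (intro mod_diff_cong mod_mult_cong; simp)
  also have "\<dots> = x" using assms by simp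
  finally show "x = (2*b - a) mod (4*t+3)" by simp
qed

lemma two_spec:
  fixes a b t :: int
  assumes "t \<ge> 0" "0 \<le> a" "a < 4*t+3" "0 \<le> b" "b < 4*t+3"
  shows "((2*b - a) mod (4*t+3) + 2*((a - b) mod (4*t+3))) mod (4*t+3) = a"
    "((2*b - a) mod (4*t+3) + (a - b) mod (4*t+3)) mod (4*t+3) = b"
proof -
  have "((2*b - a) mod (4*t+3) + 2*((a - b) mod (4*t+3))) mod (4*t+3) = ((2*b - a) + 2*(a - b)) mod (4*t+3)"
    by (intro mod_add_cong mod_mult_cong; simp)
  then show "((2*b - a) mod (4*t+3) + 2*((a - b) mod (4*t+3))) mod (4*t+3) = a" using assms by simp
  have "((2*b - a) mod (4*t+3) + (a - b) mod (4*t+3)) mod (4*t+3) = ((2*b - a) + (a - b)) mod (4*t+3)"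
    by (simp add: mod_simps)
  then show "((2*b - a) mod (4*t+3) + (a - b) mod (4*t+3)) mod (4*t+3) = b" using assms by simp
qed

lemma diff_nz:
  fixes a b t :: int
  assumes "t \<ge> 0" "0 \<le> a" "a < 4*t+3" "0 \<le> b" "b < 4*t+3" "a \<noteq> b"
  shows "(b - a) mod (4*t+3) \<noteq> 0"
proof
  assume "(b - a) mod (4*t+3) = 0"
  then have "(b - a) mod (4*t+3) = 0 mod (4*t+3)" by simp
  from modeq_cases[OF this] assms show False by linarith
qed

lemma hf_nz:
  fixes a b t :: int
  assumes "t \<ge> 0" "0 \<le> a" "a < 4*t+3" "0 \<le> b" "b < 4*t+3" "a \<noteq> b"
  shows "(b - a)*(2*t+2) mod (4*t+3) \<noteq> 0"
proof
  assume "(b - a)*(2*t+2) mod (4*t+3) = 0"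
  with half_spec[of t b a] assms have "a mod (4*t+3) = b" by simp
  with assms show False by simp
qed

lemma two_ne:
  fixes a b t :: int
  assumes "t \<ge> 0" "0 \<le> a" "a < 4*t+3" "0 \<le> b" "b < 4*t+3" "a \<noteq> b"
  shows "a \<noteq> (2*b - a) mod (4*t+3)"
proof
  assume "a = (2*b - a) mod (4*t+3)"
  then have "a mod (4*t+3) = (2*b - a) mod (4*t+3)" using assms by simp
  from modeq_cases[OF this] assms show False by presburger
qed

lemma mod3_simps [simp]: "(j::int) mod 3 \<noteq> 3" "(j::int) mod 3 \<noteq> 4" "3 \<noteq> (j::int) mod 3" "4 \<noteq> (j::int) mod 3"
  by (smt (verit) pos_mod_bound)+

lemma modM_lt [simp]: "t \<ge> 0 \<Longrightarrow> (x::int) mod (4*t+3) < 4*t+3" by simp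
lemma modM_ge [simp]: "t \<ge> 0 \<Longrightarrow> 0 \<le> (x::int) mod (4*t+3)" by simp

lemma pc_inf:
  fixes t a k :: int
  assumes t: "t \<ge> 0" and a: "0 \<le> a" "a < 4*t+3" and k: "0 \<le> k" "k < 3"
  shows "{i \<in> Is t. (0,3) \<in> blk t i \<and> (a,k) \<in> blk t i} = {(a,0::int,k), (a,0::int,(k+2) mod 3)}"
proof (intro set_eqI iffI)
  fix i assume "i \<in> {i \<in> Is t. (0,3) \<in> blk t i \<and> (a,k) \<in> blk t i}"
  then obtain x h j where i: "i = (x,h,j)" "(x,h,j) \<in> Is t" "(0,3) \<in> blk t (x,h,j)" "(a,k) \<in> blk t (x,h,j)"
    by (metis (mono_tags, lifting) mem_Collect_eq prod_cases3)
  show "i \<in> {(a,0::int,k), (a,0::int,(k+2) mod 3)}"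
  proof (cases "h = 0")
    case True
    then show ?thesis using i lv[OF k] Is_iff[OF t] lv[of j] by (auto simp: blk_E)
  next
    case False
    then show ?thesis using i t by (cases "h = 4*t+3") (auto simp: blk_V blk_B Is_iff)
  qed
next
  fix i assume "i \<in> {(a,0::int,k), (a,0::int,(k+2) mod 3)}"
  then show "i \<in> {i \<in> Is t. (0,3) \<in> blk t i \<and> (a,k) \<in> blk t i}"
    using lv[OF k] a t by (auto simp: blk_E Is_iff)
qed

lemma pc_same:
  fixes t a b k :: int
  assumes t: "t \<ge> 0" and a: "0 \<le> a" "a < 4*t+3" and b: "0 \<le> b" "b < 4*t+3" and ab: "a \<noteq> b"
    and k: "0 \<le> k" "k < 3"
  shows "{i \<in> Is t. (a,k) \<in> blk t i \<and> (b,k) \<in> blk t i} =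
     {(a, (b - a)*(2*t+2) mod (4*t+3), k), (b, (a - b)*(2*t+2) mod (4*t+3), k)}"
proof (intro set_eqI iffI)
  fix i assume "i \<in> {i \<in> Is t. (a,k) \<in> blk t i \<and> (b,k) \<in> blk t i}"
  then obtain x h j where i: "i = (x,h,j)" "(x,h,j) \<in> Is t" "(a,k) \<in> blk t (x,h,j)" "(b,k) \<in> blk t (x,h,j)"
    by (metis (mono_tags, lifting) mem_Collect_eq prod_cases3)
  show "i \<in> {(a, (b - a)*(2*t+2) mod (4*t+3), k), (b, (a - b)*(2*t+2) mod (4*t+3), k)}"
  proof (cases "h = 0")
    case True
    then show ?thesis using i ab k by (auto simp: blk_E)
  next
    case h0: False
    show ?thesis
    proof (cases "h = 4*t+3")
      case True
      then show ?thesis using i ab t by (auto simp: blk_V)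
    next
      case False
      have j: "0 \<le> j" "j < 3" and x: "0 \<le> x" "x < 4*t+3" and h: "0 \<le> h" "h < 4*t+3"
        using i(2) False Is_iff[OF t] by auto
      have jj: "j \<noteq> (j+1) mod 3" using lv[OF j] by auto
      from i(3,4) h0 False consider
          "x = a" "(x + 2*h) mod (4*t+3) = b" "j = k"
        | "x = b" "(x + 2*h) mod (4*t+3) = a" "j = k"
        using ab jj by (auto simp: blk_B)
      then show ?thesis
      proof cases
        case 1
        then have "h = (b - a)*(2*t+2) mod (4*t+3)" using half_eq[OF t h, of a b] b by simp
        then show ?thesis using 1 i by simp
      next
        case 2
        then have "h = (a - b)*(2*t+2) mod (4*t+3)" using half_eq[OF t h, of b a] a by simp
        then show ?thesis using 2 i by simp
      qed
    qed
  qed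
next
  fix i assume i: "i \<in> {(a, (b - a)*(2*t+2) mod (4*t+3), k), (b, (a - b)*(2*t+2) mod (4*t+3), k)}"
  have n1: "(b - a)*(2*t+2) mod (4*t+3) \<noteq> 0" using hf_nz[OF t a b ab] .
  have n2: "(a - b)*(2*t+2) mod (4*t+3) \<noteq> 0" using hf_nz[OF t b a] ab by auto
  have m1: "(b - a)*(2*t+2) mod (4*t+3) \<noteq> 4*t+3" using t by (metis modM_lt order_less_irrefl)
  have m2: "(a - b)*(2*t+2) mod (4*t+3) \<noteq> 4*t+3" using t by (metis modM_lt order_less_irrefl)
  have s1: "(a + 2 * ((b - a)*(2*t+2) mod (4*t+3))) mod (4*t+3) = b" using half_spec[OF t b] .
  have s2: "(b + 2 * ((a - b)*(2*t+2) mod (4*t+3))) mod (4*t+3) = a" using half_spec[OF t a] .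
  show "i \<in> {i \<in> Is t. (a,k) \<in> blk t i \<and> (b,k) \<in> blk t i}"
    using i n1 n2 m1 m2 s1 s2 a b k t by (auto simp: blk_B Is_iff)
qed

lemma pc_cross1:
  fixes t a k :: int
  assumes t: "t \<ge> 0" and a: "0 \<le> a" "a < 4*t+3" and k: "0 \<le> k" "k < 3"
  shows "{i \<in> Is t. (a,k) \<in> blk t i \<and> (a,(k+1) mod 3) \<in> blk t i} = {(a, 0::int, k), (a, 4*t+3, 0)}"
proof (intro set_eqI iffI)
  fix i assume "i \<in> {i \<in> Is t. (a,k) \<in> blk t i \<and> (a,(k+1) mod 3) \<in> blk t i}"
  then obtain x h j where i: "i = (x,h,j)" "(x,h,j) \<in> Is t" "(a,k) \<in> blk t (x,h,j)" "(a,(k+1) mod 3) \<in> blk t (x,h,j)"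
    by (metis (mono_tags, lifting) mem_Collect_eq prod_cases3)
  show "i \<in> {(a, 0::int, k), (a, 4*t+3, 0)}"
  proof (cases "h = 0")
    case True
    then show ?thesis using i lv[OF k] Is_iff[OF t] lv[of j] by (auto simp: blk_E)
  next
    case h0: False
    show ?thesis
    proof (cases "h = 4*t+3")
      case True
      then show ?thesis using i t Is_iff[OF t] by (auto simp: blk_V)
    next
      case False
      have j: "0 \<le> j" "j < 3" and x: "0 \<le> x" "x < 4*t+3" and h: "0 \<le> h" "h < 4*t+3"
        using i(2) False Is_iff[OF t] by auto
      have jj: "j \<noteq> (j+1) mod 3" "(j+1) mod 3 \<noteq> j" using j by presburger+
      have mem: "(a,k) \<in> {(x,j),((x+2*h) mod (4*t+3), j),((x+h) mod (4*t+3),(j+1) mod 3)}"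
        "(a,(k+1) mod 3) \<in> {(x,j),((x+2*h) mod (4*t+3), j),((x+h) mod (4*t+3),(j+1) mod 3)}"
        using i(3,4) h0 False by (simp_all add: blk_B)
      have kj: "k = j"
      proof -
        have "k = j \<or> k = (j+1) mod 3" "(k+1) mod 3 = j \<or> (k+1) mod 3 = (j+1) mod 3" using mem by auto
        then show ?thesis using j k by presburger
      qed
      have m1: "a = x \<or> a = (x+2*h) mod (4*t+3)" using mem(1) jj(1) unfolding kj by simp
      have m2: "a = (x+h) mod (4*t+3)" using mem(2) jj(2) unfolding kj by simp
      consider
          "x = a" "(x + h) mod (4*t+3) = a"
        | "(x + 2*h) mod (4*t+3) = a" "(x + h) mod (4*t+3) = a"
        using m1 m2 by metis
      then show ?thesis
      proof cases
        case 1
        then have "h = (a - a) mod (4*t+3)" by (intro lin_eq[OF t h]) simp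
        then show ?thesis using h0 by simp
      next
        case 2
        then have "h = (a - a) mod (4*t+3)" using two_eq[OF t h x, of a a] by blast
        then show ?thesis using h0 by simp
      qed
    qed
  qed
next
  fix i assume i: "i \<in> {(a, 0::int, k), (a, 4*t+3, 0)}"
  show "i \<in> {i \<in> Is t. (a,k) \<in> blk t i \<and> (a,(k+1) mod 3) \<in> blk t i}"
    using i a k t lv[OF k] by (auto simp: blk_E blk_V Is_iff)
qed

lemma pc_cross2:
  fixes t a b k :: int
  assumes t: "t \<ge> 0" and a: "0 \<le> a" "a < 4*t+3" and b: "0 \<le> b" "b < 4*t+3" and ab: "a \<noteq> b"
    and k: "0 \<le> k" "k < 3"
  shows "{i \<in> Is t. (a,k) \<in> blk t i \<and> (b,(k+1) mod 3) \<in> blk t i} =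
     {(a, (b - a) mod (4*t+3), k), ((2*b - a) mod (4*t+3), (a - b) mod (4*t+3), k)}"
proof (intro set_eqI iffI)
  fix i assume "i \<in> {i \<in> Is t. (a,k) \<in> blk t i \<and> (b,(k+1) mod 3) \<in> blk t i}"
  then obtain x h j where i: "i = (x,h,j)" "(x,h,j) \<in> Is t" "(a,k) \<in> blk t (x,h,j)" "(b,(k+1) mod 3) \<in> blk t (x,h,j)"
    by (metis (mono_tags, lifting) mem_Collect_eq prod_cases3)
  show "i \<in> {(a, (b - a) mod (4*t+3), k), ((2*b - a) mod (4*t+3), (a - b) mod (4*t+3), k)}"
  proof (cases "h = 0")
    case True
    then show ?thesis using i ab k by (auto simp: blk_E)
  next
    case h0: False
    show ?thesis
    proof (cases "h = 4*t+3")
      case True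
      then show ?thesis using i ab t by (auto simp: blk_V)
    next
      case False
      have j: "0 \<le> j" "j < 3" and x: "0 \<le> x" "x < 4*t+3" and h: "0 \<le> h" "h < 4*t+3"
        using i(2) False Is_iff[OF t] by auto
      have jj: "j \<noteq> (j+1) mod 3" "(j+1) mod 3 \<noteq> j" using j by presburger+
      have mem: "(a,k) \<in> {(x,j),((x+2*h) mod (4*t+3), j),((x+h) mod (4*t+3),(j+1) mod 3)}"
        "(b,(k+1) mod 3) \<in> {(x,j),((x+2*h) mod (4*t+3), j),((x+h) mod (4*t+3),(j+1) mod 3)}"
        using i(3,4) h0 False by (simp_all add: blk_B)
      have kj: "k = j"
      proof -
        have "k = j \<or> k = (j+1) mod 3" "(k+1) mod 3 = j \<or> (k+1) mod 3 = (j+1) mod 3" using mem by auto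
        then show ?thesis using j k by presburger
      qed
      have m1: "a = x \<or> a = (x+2*h) mod (4*t+3)" using mem(1) jj(1) unfolding kj by simp
      have m2: "b = (x+h) mod (4*t+3)" using mem(2) jj(2) unfolding kj by simp
      consider
          "x = a" "(x + h) mod (4*t+3) = b" "j = k"
        | "(x + 2*h) mod (4*t+3) = a" "(x + h) mod (4*t+3) = b" "j = k"
        using m1 m2 kj by metis
      then show ?thesis
      proof cases
        case 1
        then have "h = (b - a) mod (4*t+3)" by (intro lin_eq[OF t h]) simp
        then show ?thesis using 1 i by simp
      next
        case 2
        then have "h = (a - b) mod (4*t+3) \<and> x = (2*b - a) mod (4*t+3)" using two_eq[OF t h x, of a b] by blast
        then show ?thesis using 2 i by simp
      qed
    qed
  qed
next
  fix i assume i: "i \<in> {(a, (b - a) mod (4*t+3), k), ((2*b - a) mod (4*t+3), (a - b) mod (4*t+3), k)}"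
  have n1: "(b - a) mod (4*t+3) \<noteq> 0" using diff_nz[OF t a b ab] .
  have n2: "(a - b) mod (4*t+3) \<noteq> 0" using diff_nz[OF t b a] ab by auto
  have m1: "(b - a) mod (4*t+3) \<noteq> 4*t+3" using t by (metis modM_lt order_less_irrefl)
  have m2: "(a - b) mod (4*t+3) \<noteq> 4*t+3" using t by (metis modM_lt order_less_irrefl)
  have s1: "(a + (b - a) mod (4*t+3)) mod (4*t+3) = b" using lin_spec[OF t b] .
  note s2 = two_spec[OF t a b]
  show "i \<in> {i \<in> Is t. (a,k) \<in> blk t i \<and> (b,(k+1) mod 3) \<in> blk t i}"
    using i n1 n2 m1 m2 s1 s2 a b k t by (auto simp: blk_B Is_iff)
qed

lemma two_h_ne:
  fixes t x h :: int
  assumes t: "t \<ge> 0" "0 \<le> x" "x < 4*t+3" "0 < h" "h < 4*t+3"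
  shows "(x + 2*h) mod (4*t+3) \<noteq> x"
proof
  assume "(x + 2*h) mod (4*t+3) = x"
  then have "(x + 2*h) mod (4*t+3) = x mod (4*t+3)" using assms by simp
  from modeq_cases[OF this] assms show False by presburger
qed

lemma blk_props:
  assumes t: "t \<ge> 2" and i: "i \<in> Is t"
  shows "blk t i \<subseteq> Xs t \<and> card (blk t i) = 3"
proof -
  obtain x h j where ii: "i = (x,h,j)" by (metis prod_cases3)
  have t0: "t \<ge> 0" using t by simp
  have x: "0 \<le> x" "x < 4*t+3" using i ii Is_iff[OF t0] by auto
  show ?thesis
  proof (cases "h = 0")
    case True
    then have j: "0 \<le> j" "j < 3" using i ii Is_iff[OF t0] by auto
    have "j \<noteq> (j+1) mod 3" using j by presburger
    then show ?thesis using True ii x j by (auto simp: blk_E Xs_iff)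
  next
    case h0: False
    show ?thesis
    proof (cases "h = 4*t+3")
      case True
      then show ?thesis using ii x t0 by (auto simp: blk_V Xs_iff)
    next
      case False
      then have j: "0 \<le> j" "j < 3" and h: "0 < h" "h < 4*t+3" using h0 i ii Is_iff[OF t0] by auto
      have "j \<noteq> (j+1) mod 3" using j by presburger
      moreover have "(x + 2*h) mod (4*t+3) \<noteq> x" using two_h_ne[OF t0 x h] .
      ultimately show ?thesis using h0 False ii x j t0 by (auto simp: blk_B Xs_iff)
    qed
  qed
qed

lemma pair_count_sym: "pair_count I B x y = pair_count I B y x"
  unfolding pair_count_def by (metis (no_types, lifting) Collect_cong)

lemma card_Xs: "t \<ge> 0 \<Longrightarrow> card (Xs t) = nat (12*t+10)"
proof -
  assume t: "t \<ge> 0"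
  have "Xs t = insert (0,3) ({0..<4*t+3} \<times> {0..<3})" unfolding Xs_def by auto
  moreover have "(0,3) \<notin> {0..<4*t+3} \<times> ({0..<3}::int set)" by auto
  ultimately have "card (Xs t) = Suc (card ({0..<4*t+3} \<times> ({0..<3}::int set)))" by simp
  also have "\<dots> = Suc (nat (4*t+3) * 3)" by (simp add: card_cartesian_product)
  also have "\<dots> = nat (12*t+10)" using t by (simp add: nat_mult_distrib nat_add_distrib)
  finally show ?thesis .
qed

lemma pc_reg:
  fixes t a b k l :: int
  assumes t: "t \<ge> 2" and a: "0 \<le> a" "a < 4*t+3" and b: "0 \<le> b" "b < 4*t+3"
    and k: "0 \<le> k" "k < 3" and l: "l = (k+1) mod 3"
  shows "pair_count (Is t) (blk t) (a,k) (b,l) = 2"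
proof -
  have t0: "t \<ge> 0" using t by simp
  show ?thesis
  proof (cases "a = b")
    case True
    have "(a, 0::int, k) \<noteq> (a, 4*t+3, 0)" using t by simp
    then show ?thesis unfolding pair_count_def l True using pc_cross1[OF t0 _ _ k] a True by simp
  next
    case False
    have "a \<noteq> (2*b - a) mod (4*t+3)" using two_ne[OF t0 a b False] .
    then show ?thesis unfolding pair_count_def l using pc_cross2[OF t0 a b False k] by simp
  qed
qed

lemma bibd: "t \<ge> 2 \<Longrightarrow> is_BIBD (Xs t) (nat (12*t+10)) 3 2 (Is t) (blk t)"
proof -
  assume t: "t \<ge> 2"
  then have t0: "t \<ge> 0" by simp
  have pc: "pair_count (Is t) (blk t) p q = 2" if p: "p \<in> Xs t" and q: "q \<in> Xs t" and pq: "p \<noteq> q" for p q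
  proof -
    obtain a k where pp: "p = (a,k)" by (metis prod.exhaust)
    obtain b l where qq: "q = (b,l)" by (metis prod.exhaust)
    have inf: "pair_count (Is t) (blk t) (0,3) (c,m) = 2" if "0 \<le> c" "c < 4*t+3" "0 \<le> m" "m < 3" for c m
    proof -
      have "m \<noteq> (m+2) mod 3" using that by presburger
      then show ?thesis unfolding pair_count_def using pc_inf[OF t0 that] by simp
    qed
    consider "a = 0" "k = 3" | "b = 0" "l = 3" | "0 \<le> a" "a < 4*t+3" "0 \<le> k" "k < 3" "0 \<le> b" "b < 4*t+3" "0 \<le> l" "l < 3"
      using p q pp qq Xs_iff by blast
    then show ?thesis
    proof cases
      case 1
      then have "0 \<le> b" "b < 4*t+3" "0 \<le> l" "l < 3" using q qq pq pp Xs_iff by auto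
      then show ?thesis using inf 1 pp qq by simp
    next
      case 2
      then have "0 \<le> a" "a < 4*t+3" "0 \<le> k" "k < 3" using p qq pq pp Xs_iff by auto
      then show ?thesis using inf 2 pp qq pair_count_sym by metis
    next
      case 3
      then have kl: "k = l \<or> l = (k+1) mod 3 \<or> k = (l+1) mod 3" by presburger
      then show ?thesis
      proof (elim disjE)
        assume "k = l"
        then have ab: "a \<noteq> b" using pq pp qq by simp
        have "(a, (b - a)*(2*t+2) mod (4*t+3), k) \<noteq> (b, (a - b)*(2*t+2) mod (4*t+3), k)" using ab by simp
        then show ?thesis unfolding pair_count_def pp qq \<open>k = l\<close>[symmetric]
          using pc_same[OF t0 _ _ _ _ ab, of k] 3 by simp
      next
        assume "l = (k+1) mod 3"
        then show ?thesis using pc_reg[OF t, of a b k l] 3 pp qq by simp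
      next
        assume "k = (l+1) mod 3"
        then show ?thesis using pc_reg[OF t, of b a l k] 3 pp qq pair_count_sym by metis
      qed
    qed
  qed
  show ?thesis unfolding is_BIBD_def
    using card_Xs[OF t0] blk_props[OF t] pc
    by (auto simp: Xs_def Is_def)
qed

fun cidx :: "int \<Rightarrow> cdesc \<Rightarrow> int \<Rightarrow> int \<Rightarrow> int \<times> int \<times> int" where
  "cidx t DV1 k a = ((a - t - 2) mod (4*t+3), 4*t+3, 0)"
| "cidx t DV2 k a = (a, 4*t+3, 0)"
| "cidx t DE1 k a = ((a - t) mod (4*t+3), 0, (k+1) mod 3)"
| "cidx t DE2 k a = (a, 0, (k+2) mod 3)"
| "cidx t (DB0 h) k a = (a, h, k)"
| "cidx t (DB1 h) k a = ((a - 2*h) mod (4*t+3), h, k)"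

lemma modsub: "t \<ge> 0 \<Longrightarrow> 0 \<le> x \<Longrightarrow> x < 4*t+3 \<Longrightarrow> ((x + c) mod (4*t+3) - c) mod (4*t+3) = (x::int)"
  by (simp add: mod_simps)
lemma moddiff1: "((x + c) mod (4*t+3) - x) mod (4*t+3) = (c::int) mod (4*t+3)"
  by (simp add: mod_simps)
lemma moddiff2: "(x - (x + c) mod (4*t+3)) mod (4*t+3) = (-c::int) mod (4*t+3)"
  by (simp add: mod_simps)
lemma moddiff3: "((x + c) mod (4*t+3) - (x + d) mod (4*t+3)) mod (4*t+3) = (c - d::int) mod (4*t+3)"
  by (simp add: mod_simps)

lemma doubleton_cases: "{p, z} = {u, v} \<Longrightarrow> u \<noteq> v \<Longrightarrow> (p = u \<and> z = v) \<or> (p = v \<and> z = u)"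
  by (auto simp: doubleton_eq_iff)

lemma Cdesc:
  fixes t x h j a b k :: int
  assumes t: "t \<ge> 2" and i: "(x,h,j) \<in> Is t" and hx: "h = 0 \<or> h = 4*t+3 \<or> h \<in> HX t"
    and z: "z \<in> blk t (x,h,j)" and eq: "{ph t (x,h,j), z} = {(a,k),(b,(k+1) mod 3)}"
    and a: "0 \<le> a" "a < 4*t+3" and b: "0 \<le> b" "b < 4*t+3" and k: "0 \<le> k" "k < 3"
  shows "\<exists>d \<in> DC t. cv t d mod (4*t+3) = (b - a) mod (4*t+3) \<and> (x,h,j) = cidx t d k a"
proof -
  have t0: "t \<ge> 0" using t by simp
  have x: "0 \<le> x" "x < 4*t+3" using i Is_iff[OF t0] by auto
  have kne: "(a,k) \<noteq> (b,(k+1) mod 3)" using k by auto presburger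
  from doubleton_cases[OF eq kne] have o:
    "(ph t (x,h,j) = (a,k) \<and> z = (b,(k+1) mod 3)) \<or> (ph t (x,h,j) = (b,(k+1) mod 3) \<and> z = (a,k))" .
  have k3: "k \<noteq> 3" "(k+1) mod 3 \<noteq> 3" using k by auto
  consider (E) "h = 0" | (V) "h = 4*t+3" | (B) "h \<noteq> 0" "h \<noteq> 4*t+3" "h \<in> HX t" using hx by auto
  then show ?thesis
  proof cases
    case E
    have j: "0 \<le> j" "j < 3" using i E Is_iff[OF t0] by auto
    have ph: "ph t (x,h,j) = ((x+t) mod (4*t+3), (j+2) mod 3)" using E ph_E by simp
    from z E have "z = (0,3) \<or> z = (x,j) \<or> z = (x,(j+1) mod 3)" by (simp add: blk_E)
    then consider "z = (0,3)" | "z = (x,j)" | "z = (x,(j+1) mod 3)" by blast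
    then show ?thesis
    proof cases
      case 1 then show ?thesis using o k3 by auto
    next
      case 2
      show ?thesis
      proof (cases "ph t (x,h,j) = (a,k) \<and> z = (b,(k+1) mod 3)")
        case True
        then have e: "a = (x+t) mod (4*t+3)" "k = (j+2) mod 3" "b = x" "j = (k+1) mod 3" using ph 2 by auto
        have "cv t DE1 mod (4*t+3) = (b - a) mod (4*t+3)" using e moddiff2 by simp
        moreover have "(x,h,j) = cidx t DE1 k a" using e E modsub[OF t0 x] by simp
        ultimately show ?thesis unfolding DC_def by blast
      next
        case False
        then have "(j+2) mod 3 = (k+1) mod 3" "j = k" using o ph 2 by auto
        then show ?thesis using j by presburger
      qed
    next
      case 3
      show ?thesis
      proof (cases "ph t (x,h,j) = (a,k) \<and> z = (b,(k+1) mod 3)")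
        case True
        then have "(j+2) mod 3 = k" "(j+1) mod 3 = (k+1) mod 3" using ph 3 by auto
        then show ?thesis using j by presburger
      next
        case False
        then have e: "b = (x+t) mod (4*t+3)" "(j+2) mod 3 = (k+1) mod 3" "a = x" "(j+1) mod 3 = k"
          using o ph 3 by auto
        have jj: "j = (k+2) mod 3" using e(4) j by presburger
        have "cv t DE2 mod (4*t+3) = (b - a) mod (4*t+3)" using e moddiff1 by simp
        moreover have "(x,h,j) = cidx t DE2 k a" using e E jj by simp
        ultimately show ?thesis unfolding DC_def by blast
      qed
    qed
  next
    case V
    have j: "j = 0" using i V Is_iff[OF t0] by auto
    have ph: "ph t (x,h,j) = ((x+t+2) mod (4*t+3), 0)" using V ph_V t0 by simp
    from z V t0 have "z = (x,0) \<or> z = (x,1) \<or> z = (x,2)" by (simp add: blk_V)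
    then consider "z = (x,0)" | "z = (x,1)" | "z = (x,2)" by blast
    then show ?thesis
    proof cases
      case 1
      then have "k = 0 \<and> (k+1) mod 3 = 0" using o ph by auto
      then have False by auto
      then show ?thesis ..
    next
      case 2
      show ?thesis
      proof (cases "ph t (x,h,j) = (a,k) \<and> z = (b,(k+1) mod 3)")
        case True
        then have e: "a = (x+t+2) mod (4*t+3)" "k = 0" "b = x" using ph 2 by auto
        have "cv t DV1 mod (4*t+3) = (b - a) mod (4*t+3)"
          using e moddiff2[of x "t+2" t] by (simp add: add.assoc)
        moreover have "(x,h,j) = cidx t DV1 k a" using e V j modsub[OF t0 x, of "t+2"] by (simp add: add.assoc diff_diff_eq)
        ultimately show ?thesis unfolding DC_def by blast
      next
        case False
        then have "(k+1) mod 3 = 0" "k = 1" using o ph 2 by auto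
        then show ?thesis by simp
      qed
    next
      case 3
      show ?thesis
      proof (cases "ph t (x,h,j) = (a,k) \<and> z = (b,(k+1) mod 3)")
        case True
        then have "k = 0" "(k+1) mod 3 = 2" using ph 3 by auto
        then show ?thesis by simp
      next
        case False
        then have e: "b = (x+t+2) mod (4*t+3)" "k = 2" "a = x" using o ph 3 by auto
        have "cv t DV2 mod (4*t+3) = (b - a) mod (4*t+3)"
          using e moddiff1[of x "t+2" t] by (simp add: add.assoc)
        moreover have "(x,h,j) = cidx t DV2 k a" using e V j by simp
        ultimately show ?thesis unfolding DC_def by blast
      qed
    qed
  next
    case B
    have j: "0 \<le> j" "j < 3" using i B Is_iff[OF t0] by auto
    have ph: "ph t (x,h,j) = ((x + gf t h) mod (4*t+3), (j+1) mod 3)" using B ph_B by simp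
    have jj: "j \<noteq> (j+1) mod 3" "(j+2) mod 3 \<noteq> j" using j by presburger+
    from z B have "z = (x,j) \<or> z = ((x+2*h) mod (4*t+3), j) \<or> z = ((x+h) mod (4*t+3),(j+1) mod 3)"
      by (simp add: blk_B)
    then consider "z = (x,j)" | "z = ((x+2*h) mod (4*t+3), j)" | "z = ((x+h) mod (4*t+3),(j+1) mod 3)" by blast
    then show ?thesis
    proof cases
      case 1
      show ?thesis
      proof (cases "ph t (x,h,j) = (a,k) \<and> z = (b,(k+1) mod 3)")
        case True
        then have "k = (j+1) mod 3" "j = (k+1) mod 3" using ph 1 by auto
        then show ?thesis using j by presburger
      next
        case False
        then have e: "b = (x + gf t h) mod (4*t+3)" "a = x" "k = j" using o ph 1 by auto
        have "cv t (DB0 h) mod (4*t+3) = (b - a) mod (4*t+3)" using e moddiff1 by simp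
        moreover have "(x,h,j) = cidx t (DB0 h) k a" using e by simp
        moreover have "DB0 h \<in> DC t" using B unfolding DC_def by blast
        ultimately show ?thesis by blast
      qed
    next
      case 2
      show ?thesis
      proof (cases "ph t (x,h,j) = (a,k) \<and> z = (b,(k+1) mod 3)")
        case True
        then have "k = (j+1) mod 3" "j = (k+1) mod 3" using ph 2 by auto
        then show ?thesis using j by presburger
      next
        case False
        then have e: "b = (x + gf t h) mod (4*t+3)" "a = (x+2*h) mod (4*t+3)" "k = j" using o ph 2 by auto
        have "cv t (DB1 h) mod (4*t+3) = (b - a) mod (4*t+3)" using e moddiff3 by simp
        moreover have "(x,h,j) = cidx t (DB1 h) k a" using e modsub[OF t0 x] by simp
        moreover have "DB1 h \<in> DC t" using B unfolding DC_def by blast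
        ultimately show ?thesis by blast
      qed
    next
      case 3
      then have "(j+1) mod 3 = k \<and> (j+1) mod 3 = (k+1) mod 3" using o ph by auto
      then show ?thesis using k by presburger
    qed
  qed
qed

fun sidx :: "int \<Rightarrow> sdesc \<Rightarrow> int \<Rightarrow> int \<Rightarrow> int \<Rightarrow> int \<Rightarrow> int \<times> int \<times> int" where
  "sidx t SV \<sigma> k a b = ((if \<sigma> = 1 then a else b), 4*t+3, 0)"
| "sidx t (SB h) \<sigma> k a b = (((if \<sigma> = 1 then a else b) - h) mod (4*t+3), h, (k+2) mod 3)"

lemma Sdesc:
  fixes t x h j a b k :: int
  assumes t: "t \<ge> 2" and i: "(x,h,j) \<in> Is t" and hx: "h = 0 \<or> h = 4*t+3 \<or> h \<in> HX t"
    and z: "z \<in> blk t (x,h,j)" and eq: "{ph t (x,h,j), z} = {(a,k),(b,k)}" and ab: "a \<noteq> b"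
    and a: "0 \<le> a" "a < 4*t+3" and b: "0 \<le> b" "b < 4*t+3" and k: "0 \<le> k" "k < 3"
  shows "\<exists>d \<in> DS t. \<exists>\<sigma>. (\<sigma> = 1 \<or> \<sigma> = -1) \<and> (\<sigma> * sv t d) mod (4*t+3) = (b - a) mod (4*t+3)
           \<and> (x,h,j) = sidx t d \<sigma> k a b"
proof -
  have t0: "t \<ge> 0" using t by simp
  have x: "0 \<le> x" "x < 4*t+3" using i Is_iff[OF t0] by auto
  have kne: "(a,k) \<noteq> (b,k)" using ab by auto
  from doubleton_cases[OF eq kne] have o:
    "(ph t (x,h,j) = (a,k) \<and> z = (b,k)) \<or> (ph t (x,h,j) = (b,k) \<and> z = (a,k))" .
  then have lv_eq: "snd (ph t (x,h,j)) = snd z" by auto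
  consider (E) "h = 0" | (V) "h = 4*t+3" | (B) "h \<noteq> 0" "h \<noteq> 4*t+3" "h \<in> HX t" using hx by auto
  then show ?thesis
  proof cases
    case E
    have j: "0 \<le> j" "j < 3" using i E Is_iff[OF t0] by auto
    have ph: "ph t (x,h,j) = ((x+t) mod (4*t+3), (j+2) mod 3)" using E ph_E by simp
    from z E have "z = (0,3) \<or> z = (x,j) \<or> z = (x,(j+1) mod 3)" by (simp add: blk_E)
    then have "(j+2) mod 3 = 3 \<or> (j+2) mod 3 = j \<or> (j+2) mod 3 = (j+1) mod 3" using lv_eq ph by auto
    then have False using j by presburger
    then show ?thesis ..
  next
    case V
    have j: "j = 0" using i V Is_iff[OF t0] by auto
    have ph: "ph t (x,h,j) = ((x+t+2) mod (4*t+3), 0)" using V ph_V t0 by simp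
    from z V t0 have "z = (x,0) \<or> z = (x,1) \<or> z = (x,2)" by (simp add: blk_V)
    then have z0: "z = (x,0)" using lv_eq ph by auto
    have SV: "SV \<in> DS t" unfolding DS_def by simp
    show ?thesis
    proof (cases "ph t (x,h,j) = (a,k) \<and> z = (b,k)")
      case True
      then have e: "a = (x+t+2) mod (4*t+3)" "b = x" using ph z0 by auto
      have "((-1) * sv t SV) mod (4*t+3) = (b - a) mod (4*t+3)"
        using e moddiff2[of x "t+2" t] by (simp add: add.assoc)
      moreover have "(x,h,j) = sidx t SV (-1) k a b" using e V j by simp
      ultimately show ?thesis using SV by blast
    next
      case False
      then have e: "b = (x+t+2) mod (4*t+3)" "a = x" using o ph z0 by auto
      have "(1 * sv t SV) mod (4*t+3) = (b - a) mod (4*t+3)"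
        using e moddiff1[of x "t+2" t] by (simp add: add.assoc)
      moreover have "(x,h,j) = sidx t SV 1 k a b" using e V j by simp
      ultimately show ?thesis using SV by blast
    qed
  next
    case B
    have j: "0 \<le> j" "j < 3" using i B Is_iff[OF t0] by auto
    have ph: "ph t (x,h,j) = ((x + gf t h) mod (4*t+3), (j+1) mod 3)" using B ph_B by simp
    have jj: "j \<noteq> (j+1) mod 3" using j by presburger
    from z B have "z = (x,j) \<or> z = ((x+2*h) mod (4*t+3), j) \<or> z = ((x+h) mod (4*t+3),(j+1) mod 3)"
      by (simp add: blk_B)
    then have z0: "z = ((x+h) mod (4*t+3),(j+1) mod 3)" using lv_eq ph jj by auto
    have "k = (j+1) mod 3" using o ph by auto
    then have kj: "(k+2) mod 3 = j" using j by presburger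
    have SB: "SB h \<in> DS t" using B unfolding DS_def by simp
    show ?thesis
    proof (cases "ph t (x,h,j) = (a,k) \<and> z = (b,k)")
      case True
      then have e: "a = (x + gf t h) mod (4*t+3)" "b = (x+h) mod (4*t+3)" using ph z0 by auto
      have "((-1) * sv t (SB h)) mod (4*t+3) = (b - a) mod (4*t+3)"
        using e moddiff3[of x h t "gf t h"] by simp
      moreover have "(x,h,j) = sidx t (SB h) (-1) k a b" using e kj modsub[OF t0 x] by simp
      ultimately show ?thesis using SB by blast
    next
      case False
      then have e: "b = (x + gf t h) mod (4*t+3)" "a = (x+h) mod (4*t+3)" using o ph z0 by auto
      have "(1 * sv t (SB h)) mod (4*t+3) = (b - a) mod (4*t+3)"
        using e moddiff3[of x "gf t h" t h] by simp
      moreover have "(x,h,j) = sidx t (SB h) 1 k a b" using e kj modsub[OF t0 x] by simp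
      ultimately show ?thesis using SB by blast
    qed
  qed
qed

lemma Idesc:
  fixes t x h j a k :: int
  assumes t: "t \<ge> 2" and i: "(x,h,j) \<in> Is t" and hx: "h = 0 \<or> h = 4*t+3 \<or> h \<in> HX t"
    and z: "z \<in> blk t (x,h,j)" and eq: "{ph t (x,h,j), z} = {(0,3),(a,k)}"
    and a: "0 \<le> a" "a < 4*t+3" and k: "0 \<le> k" "k < 3"
  shows "(x,h,j) = ((a - t) mod (4*t+3), 0, (k+1) mod 3)"
proof -
  have t0: "t \<ge> 0" using t by simp
  have x: "0 \<le> x" "x < 4*t+3" using i Is_iff[OF t0] by auto
  have kne: "(0::int,3::int) \<noteq> (a,k)" using k by auto
  from doubleton_cases[OF eq kne] have o:
    "(ph t (x,h,j) = (0,3) \<and> z = (a,k)) \<or> (ph t (x,h,j) = (a,k) \<and> z = (0,3))" .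
  have phn: "ph t (x,h,j) \<noteq> (0,3)"
    using hx t0 by (cases "h = 0"; cases "h = 4*t+3"; simp add: ph_E ph_V ph_B)
  then have o2: "ph t (x,h,j) = (a,k)" "z = (0,3)" using o by auto
  have h0: "h = 0"
  proof (rule ccontr)
    assume "h \<noteq> 0"
    then show False using z o2 t0 i Is_iff[OF t0]
      by (cases "h = 4*t+3") (auto simp: blk_V blk_B)
  qed
  have j: "0 \<le> j" "j < 3" using i h0 Is_iff[OF t0] by auto
  have e: "a = (x+t) mod (4*t+3)" "k = (j+2) mod 3" using o2 h0 ph_E by auto
  have "j = (k+1) mod 3" using e(2) j by presburger
  then show ?thesis using e(1) h0 modsub[OF t0 x] by simp
qed

definition xn :: "int \<Rightarrow> int \<times> int \<times> int \<Rightarrow> bool" where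
  "xn t i = (case i of (x,h,j) \<Rightarrow> h = 0 \<or> h = 4*t+3 \<or> h \<in> HX t)"

lemma Auniq:
  assumes t: "t \<ge> 2" and p: "p \<in> Xs t" and q: "q \<in> Xs t" and pq: "p \<noteq> q"
    and i: "i \<in> Is t" and i': "i' \<in> Is t" and xi: "xn t i" and xi': "xn t i'"
    and z: "z \<in> blk t i" and z': "z' \<in> blk t i'"
    and e: "{ph t i, z} = {p,q}" and e': "{ph t i', z'} = {p,q}"
  shows "i = i'"
proof -
  have t0: "t \<ge> 0" using t by simp
  obtain x h j where ii: "i = (x,h,j)" by (metis prod_cases3)
  obtain x' h' j' where ii': "i' = (x',h',j')" by (metis prod_cases3)
  have hx: "h = 0 \<or> h = 4*t+3 \<or> h \<in> HX t" using xi ii unfolding xn_def by simp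
  have hx': "h' = 0 \<or> h' = 4*t+3 \<or> h' \<in> HX t" using xi' ii' unfolding xn_def by simp
  obtain a k where pp: "p = (a,k)" by (metis prod.exhaust)
  obtain b l where qq: "q = (b,l)" by (metis prod.exhaust)
  consider "a = 0" "k = 3" | "b = 0" "l = 3" | "0 \<le> a" "a < 4*t+3" "0 \<le> k" "k < 3" "0 \<le> b" "b < 4*t+3" "0 \<le> l" "l < 3"
    using p q pp qq Xs_iff by blast
  then show ?thesis
  proof cases
    case 1
    then have B: "0 \<le> b" "b < 4*t+3" "0 \<le> l" "l < 3" using q qq pq pp Xs_iff by auto
    have "(x,h,j) = ((b - t) mod (4*t+3), 0, (l+1) mod 3)"
      using Idesc[OF t i[unfolded ii] hx z[unfolded ii] _ B] e 1 pp qq ii by simp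
    moreover have "(x',h',j') = ((b - t) mod (4*t+3), 0, (l+1) mod 3)"
      using Idesc[OF t i'[unfolded ii'] hx' z'[unfolded ii'] _ B] e' 1 pp qq ii' by simp
    ultimately show ?thesis using ii ii' by simp
  next
    case 2
    then have A: "0 \<le> a" "a < 4*t+3" "0 \<le> k" "k < 3" using p qq pq pp Xs_iff by auto
    have s: "{p,q} = {(0,3),(a,k)}" using 2 pp qq by auto
    have "(x,h,j) = ((a - t) mod (4*t+3), 0, (k+1) mod 3)"
      using Idesc[OF t i[unfolded ii] hx z[unfolded ii] _ A] e s ii by simp
    moreover have "(x',h',j') = ((a - t) mod (4*t+3), 0, (k+1) mod 3)"
      using Idesc[OF t i'[unfolded ii'] hx' z'[unfolded ii'] _ A] e' s ii' by simp
    ultimately show ?thesis using ii ii' by simp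
  next
    case 3
    then have kl: "k = l \<or> l = (k+1) mod 3 \<or> k = (l+1) mod 3" by presburger
    then show ?thesis
    proof (elim disjE)
      assume kl: "k = l"
      then have ab: "a \<noteq> b" using pq pp qq by simp
      have e1: "{ph t (x,h,j), z} = {(a,k),(b,k)}" using e pp qq kl ii by simp
      have e2: "{ph t (x',h',j'), z'} = {(a,k),(b,k)}" using e' pp qq kl ii' by simp
      obtain d \<sigma> where d: "d \<in> DS t" "\<sigma> = 1 \<or> \<sigma> = -1" "(\<sigma> * sv t d) mod (4*t+3) = (b - a) mod (4*t+3)"
          "(x,h,j) = sidx t d \<sigma> k a b"
        using Sdesc[OF t i[unfolded ii] hx z[unfolded ii] e1 ab] 3 by blast
      obtain d' \<sigma>' where d': "d' \<in> DS t" "\<sigma>' = 1 \<or> \<sigma>' = -1" "(\<sigma>' * sv t d') mod (4*t+3) = (b - a) mod (4*t+3)"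
          "(x',h',j') = sidx t d' \<sigma>' k a b"
        using Sdesc[OF t i'[unfolded ii'] hx' z'[unfolded ii'] e2 ab] 3 by blast
      have "d = d' \<and> \<sigma> = \<sigma>'" using sinj[OF t d(1) d'(1) d(2) d'(2)] d(3) d'(3) by simp
      then show ?thesis using d(4) d'(4) ii ii' by simp
    next
      assume kl: "l = (k+1) mod 3"
      have e1: "{ph t (x,h,j), z} = {(a,k),(b,(k+1) mod 3)}" using e pp qq kl ii by simp
      have e2: "{ph t (x',h',j'), z'} = {(a,k),(b,(k+1) mod 3)}" using e' pp qq kl ii' by simp
      obtain d where d: "d \<in> DC t" "cv t d mod (4*t+3) = (b - a) mod (4*t+3)" "(x,h,j) = cidx t d k a"
        using Cdesc[OF t i[unfolded ii] hx z[unfolded ii] e1] 3 by blast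
      obtain d' where d': "d' \<in> DC t" "cv t d' mod (4*t+3) = (b - a) mod (4*t+3)" "(x',h',j') = cidx t d' k a"
        using Cdesc[OF t i'[unfolded ii'] hx' z'[unfolded ii'] e2] 3 by blast
      have "d = d'" using cinj[OF t d(1) d'(1)] d(2) d'(2) by simp
      then show ?thesis using d(3) d'(3) ii ii' by simp
    next
      assume kl: "k = (l+1) mod 3"
      have e1: "{ph t (x,h,j), z} = {(b,l),(a,(l+1) mod 3)}" using e pp qq kl ii by auto
      have e2: "{ph t (x',h',j'), z'} = {(b,l),(a,(l+1) mod 3)}" using e' pp qq kl ii' by auto
      obtain d where d: "d \<in> DC t" "cv t d mod (4*t+3) = (a - b) mod (4*t+3)" "(x,h,j) = cidx t d l b"
        using Cdesc[OF t i[unfolded ii] hx z[unfolded ii] e1] 3 by blast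
      obtain d' where d': "d' \<in> DC t" "cv t d' mod (4*t+3) = (a - b) mod (4*t+3)" "(x',h',j') = cidx t d' l b"
        using Cdesc[OF t i'[unfolded ii'] hx' z'[unfolded ii'] e2] 3 by blast
      have "d = d'" using cinj[OF t d(1) d'(1)] d(2) d'(2) by simp
      then show ?thesis using d(3) d'(3) ii ii' by simp
    qed
  qed
qed

lemma ph_Xs: "t \<ge> 0 \<Longrightarrow> i \<in> Is t \<Longrightarrow> xn t i \<Longrightarrow> ph t i \<in> Xs t"
proof -
  assume t0: "t \<ge> 0" and i: "i \<in> Is t" and xi: "xn t i"
  obtain x h j where ii: "i = (x,h,j)" by (metis prod_cases3)
  have hx: "h = 0 \<or> h = 4*t+3 \<or> h \<in> HX t" using xi ii unfolding xn_def by simp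
  have j: "h \<noteq> 4*t+3 \<Longrightarrow> 0 \<le> j \<and> j < 3" using i ii Is_iff[OF t0] by auto
  show ?thesis using hx j t0 ii
    by (cases "h = 0"; cases "h = 4*t+3") (auto simp: ph_E ph_V ph_B Xs_iff)
qed

lemma ph_N2: "t \<ge> 0 \<Longrightarrow> i \<in> Is t \<Longrightarrow> \<not> xn t i \<Longrightarrow> \<exists>h \<in> Hn t. ph t i = (h,4) \<and> fst (snd i) = h"
proof -
  assume t0: "t \<ge> 0" and i: "i \<in> Is t" and xi: "\<not> xn t i"
  obtain x h j where ii: "i = (x,h,j)" by (metis prod_cases3)
  have hx: "h \<noteq> 0" "h \<noteq> 4*t+3" "h \<notin> HX t" using xi ii unfolding xn_def by auto
  have "0 \<le> h" "h < 4*t+3" using i ii Is_iff[OF t0] hx by auto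
  then have "h \<in> Hn t" using hx unfolding Hn_def by auto
  then show ?thesis using ph_N[OF hx] ii by auto
qed

lemma Xs_ne4: "(h,4) \<notin> Xs t" by (simp add: Xs_iff)

lemma ph_props:
  assumes t: "t \<ge> 2" and i: "i \<in> Is t"
  shows "ph t i \<in> Ys t \<and> ph t i \<notin> blk t i"
proof -
  have t0: "t \<ge> 0" using t by simp
  obtain x h j where ii: "i = (x,h,j)" by (metis prod_cases3)
  have x: "0 \<le> x" "x < 4*t+3" using i ii Is_iff[OF t0] by auto
  show ?thesis
  proof (cases "xn t i")
    case False
    then obtain h0 where h0: "h0 \<in> Hn t" "ph t i = (h0,4)" using ph_N2[OF t0 i] by blast
    have "(h0,4) \<notin> blk t i" using blk_props[OF t i] Xs_ne4 by blast
    then show ?thesis using h0 unfolding Ys_def by auto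
  next
    case True
    have inY: "ph t i \<in> Ys t" using ph_Xs[OF t0 i True] unfolding Ys_def by auto
    have hx: "h = 0 \<or> h = 4*t+3 \<or> h \<in> HX t" using True ii unfolding xn_def by simp
    consider (E) "h = 0" | (V) "h = 4*t+3" | (B) "h \<noteq> 0" "h \<noteq> 4*t+3" "h \<in> HX t" using hx by auto
    then show ?thesis
    proof cases
      case E
      have j: "0 \<le> j" "j < 3" using i ii E Is_iff[OF t0] by auto
      have "(j+2) mod 3 \<noteq> j" "(j+2) mod 3 \<noteq> (j+1) mod 3" using j by presburger+
      then show ?thesis using inY ii E by (simp add: ph_E blk_E)
    next
      case V
      have "(x + (t+2)) mod (4*t+3) \<noteq> x"
      proof
        assume "(x + (t+2)) mod (4*t+3) = x"
        then have "(x + (t+2)) mod (4*t+3) = x mod (4*t+3)" using x by simp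
        from modeq_cases[OF this] t show False by linarith
      qed
      then show ?thesis using inY ii V t0 by (simp add: ph_V blk_V add.assoc)
    next
      case B
      have j: "0 \<le> j" "j < 3" using i ii B Is_iff[OF t0] by auto
      have jj: "(j+1) mod 3 \<noteq> j" using j by presburger
      have SB: "SB h \<in> DS t" using B unfolding DS_def by simp
      have r: "1 \<le> gf t h - h" "gf t h - h \<le> 2*t+1" using sv_range[OF t SB] by auto
      have "(x + gf t h) mod (4*t+3) \<noteq> (x + h) mod (4*t+3)"
      proof
        assume "(x + gf t h) mod (4*t+3) = (x + h) mod (4*t+3)"
        from modeq_cases[OF this] r t show False by linarith
      qed
      then show ?thesis using inY ii B jj by (simp add: ph_B blk_B)
    qed
  qed
qed

lemma H1_img: "H1 t = (\<lambda>r. 3*r-2) ` {1..t}" unfolding H1_def by auto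
lemma H2_img: "H2 t = (\<lambda>r. 3*r+2) ` {1..t-1}" unfolding H2_def by auto

lemma card_HX: "t \<ge> 2 \<Longrightarrow> card (HX t) = nat (2*t-1)"
proof -
  assume t: "t \<ge> 2"
  have c1: "card (H1 t) = nat t" unfolding H1_img by (subst card_image) (auto simp: inj_on_def)
  have c2: "card (H2 t) = nat (t-1)" unfolding H2_img by (subst card_image) (auto simp: inj_on_def)
  have m1: "h mod 3 = 1" if "h \<in> H1 t" for h
  proof -
    have "\<exists>r. 1 \<le> r \<and> r \<le> t \<and> h = 3*r-2" using that by (simp add: H1_def)
    then obtain r where "h = 3*r-2" by blast
    then show ?thesis by presburger
  qed
  have m2: "h mod 3 = 2" if "h \<in> H2 t" for h
  proof -
    have "\<exists>r. 1 \<le> r \<and> r \<le> t-1 \<and> h = 3*r+2" using that by (simp add: H2_def)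
    then obtain r where "h = 3*r+2" by blast
    then show ?thesis by presburger
  qed
  have d: "H1 t \<inter> H2 t = {}" using m1 m2 by fastforce
  have "card (HX t) = card (H1 t) + card (H2 t)" unfolding HX_def
    by (rule card_Un_disjoint[OF _ _ d]) (simp_all add: H1_img H2_img)
  then show ?thesis using c1 c2 t by simp
qed

lemma HX_sub: "t \<ge> 2 \<Longrightarrow> HX t \<subseteq> {1..<4*t+3}"
  unfolding HX_def H1_def H2_def by auto

lemma card_Ys: "t \<ge> 2 \<Longrightarrow> card (Ys t) = nat (14*t+13)"
proof -
  assume t: "t \<ge> 2"
  have cH: "card (Hn t) = nat (2*t+3)"
  proof -
    have "card (Hn t) = card {1..<4*t+3} - card (HX t)"
      unfolding Hn_def by (rule card_Diff_subset) (use HX_sub[OF t] finite_subset in auto)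
    then show ?thesis using card_HX[OF t] t by simp
  qed
  have ci: "card ((\<lambda>h. (h,4::int)) ` Hn t) = card (Hn t)" by (rule card_image) (auto simp: inj_on_def)
  have fX: "finite (Xs t)" unfolding Xs_def by simp
  have fH: "finite ((\<lambda>h. (h,4::int)) ` Hn t)" unfolding Hn_def by simp
  have dj: "Xs t \<inter> (\<lambda>h. (h,4::int)) ` Hn t = {}" using Xs_ne4 by auto
  have "card (Ys t) = card (Xs t) + card ((\<lambda>h. (h,4::int)) ` Hn t)"
    unfolding Ys_def by (rule card_Un_disjoint[OF fX fH dj])
  then show ?thesis using card_Xs[of t] t cH ci by simp
qed

lemma card3: "card {u,v,w} \<le> 3" by (simp add: card_insert_if)

lemma pc_XX:
  assumes t: "t \<ge> 2" and p: "p \<in> Xs t" and q: "q \<in> Xs t" and pq: "p \<noteq> q"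
  shows "pair_count (Is t) (\<lambda>i. insert (ph t i) (blk t i)) p q \<le> 3"
proof -
  have t0: "t \<ge> 0" using t by simp
  let ?S = "{i \<in> Is t. p \<in> insert (ph t i) (blk t i) \<and> q \<in> insert (ph t i) (blk t i)}"
  let ?P = "{i \<in> Is t. p \<in> blk t i \<and> q \<in> blk t i}"
  let ?A = "{i \<in> Is t. xn t i \<and> (\<exists>z \<in> blk t i. {ph t i, z} = {p,q})}"
  have fI: "finite (Is t)" unfolding Is_def by simp
  have cP: "card ?P = 2" using bibd[OF t] p q pq unfolding is_BIBD_def pair_count_def by blast
  have xnI: "xn t i" if "i \<in> Is t" "ph t i \<in> Xs t" for i
    using ph_N2[OF t0 that(1)] that(2) Xs_ne4 by metis
  have sub: "?S \<subseteq> ?P \<union> ?A"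
  proof
    fix i assume iS: "i \<in> ?S"
    show "i \<in> ?P \<union> ?A"
    proof (cases "p \<in> blk t i \<and> q \<in> blk t i")
      case True then show ?thesis using iS by auto
    next
      case False
      moreover have "ph t i \<notin> blk t i" using ph_props[OF t, of i] iS by simp
      ultimately have "(ph t i = p \<and> q \<in> blk t i) \<or> (ph t i = q \<and> p \<in> blk t i)" using iS pq by auto
      then show ?thesis
      proof
        assume a: "ph t i = p \<and> q \<in> blk t i"
        then have "xn t i" using xnI iS p by auto
        then show ?thesis using a iS by auto
      next
        assume a: "ph t i = q \<and> p \<in> blk t i"
        then have "xn t i" using xnI iS q by auto
        moreover have "{ph t i, p} = {p,q}" using a by auto
        ultimately show ?thesis using a iS by auto
      qed
    qed
  qed
  have cA: "card ?A \<le> 1"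
  proof -
    have fA: "finite ?A" using fI by simp
    have "\<forall>i\<in>?A. \<forall>i'\<in>?A. i = i'"
    proof (intro ballI)
      fix i i' assume "i \<in> ?A" "i' \<in> ?A"
      then show "i = i'" using Auniq[OF t p q pq] by blast
    qed
    then show ?thesis using card_le_Suc0_iff_eq[OF fA] by simp
  qed
  have fPA: "finite (?P \<union> ?A)" using fI by simp
  have "card ?S \<le> card (?P \<union> ?A)" by (rule card_mono[OF fPA sub])
  also have "\<dots> \<le> card ?P + card ?A" by (rule card_Un_le)
  finally show ?thesis unfolding pair_count_def using cP cA by simp
qed

lemma solve_x: "t \<ge> 0 \<Longrightarrow> 0 \<le> x \<Longrightarrow> x < 4*t+3 \<Longrightarrow> (x + c) mod (4*t+3) = a \<Longrightarrow> x = (a - c) mod (4*t+3)"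
  for x c a t :: int
  using modsub by metis

lemma pc_NX:
  assumes t: "t \<ge> 2" and h0: "h0 \<in> Hn t" and q: "q \<in> Xs t"
  shows "pair_count (Is t) (\<lambda>i. insert (ph t i) (blk t i)) (h0,4) q \<le> 3"
proof -
  have t0: "t \<ge> 0" using t by simp
  obtain a k where qq: "q = (a,k)" by (metis prod.exhaust)
  let ?S = "{i \<in> Is t. (h0,4) \<in> insert (ph t i) (blk t i) \<and> q \<in> insert (ph t i) (blk t i)}"
  let ?T = "{(a,h0,k), ((a - 2*h0) mod (4*t+3), h0, k), ((a - h0) mod (4*t+3), h0, (k+2) mod 3)}"
  have sub: "?S \<subseteq> ?T"
  proof
    fix i assume iS: "i \<in> ?S"
    obtain x h j where ii: "i = (x,h,j)" by (metis prod_cases3)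
    have iI: "i \<in> Is t" using iS by simp
    have "(h0,4) \<notin> blk t i" using blk_props[OF t iI] Xs_ne4 by blast
    then have p: "ph t i = (h0,4)" using iS by auto
    then have nx: "\<not> xn t i" using ph_Xs[OF t0 iI] Xs_ne4 by metis
    then have hh: "h \<noteq> 0" "h \<noteq> 4*t+3" "h \<notin> HX t" using ii unfolding xn_def by auto
    then have hh0: "h = h0" using p ii ph_N by simp
    have x: "0 \<le> x" "x < 4*t+3" and j: "0 \<le> j" "j < 3" using iI ii hh Is_iff[OF t0] by auto
    have "q \<noteq> ph t i" using q p Xs_ne4 by auto
    then have "q \<in> blk t i" using iS by auto
    then have m: "(a,k) = (x,j) \<or> (a,k) = ((x+2*h0) mod (4*t+3), j) \<or> (a,k) = ((x+h0) mod (4*t+3), (j+1) mod 3)"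
      using qq ii hh hh0 by (simp add: blk_B)
    then show "i \<in> ?T"
    proof (elim disjE)
      assume "(a,k) = (x,j)" then show ?thesis using ii hh0 by simp
    next
      assume e: "(a,k) = ((x+2*h0) mod (4*t+3), j)"
      then have "x = (a - 2*h0) mod (4*t+3)" using solve_x[OF t0 x] by simp
      then show ?thesis using ii hh0 e by simp
    next
      assume e: "(a,k) = ((x+h0) mod (4*t+3), (j+1) mod 3)"
      then have "x = (a - h0) mod (4*t+3)" using solve_x[OF t0 x] by simp
      moreover have "k = (j+1) mod 3" using e by simp
      then have "j = (k+2) mod 3" using j by presburger
      ultimately show ?thesis using ii hh0 by simp
    qed
  qed
  have "card ?S \<le> card ?T" by (rule card_mono) (use sub in auto)
  also have "\<dots> \<le> 3" by (rule card3)
  finally show ?thesis unfolding pair_count_def .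
qed

lemma pc_NN:
  assumes "p \<noteq> q" "p \<notin> Xs t" "q \<notin> Xs t" "t \<ge> 2"
  shows "pair_count (Is t) (\<lambda>i. insert (ph t i) (blk t i)) p q \<le> 3"
proof -
  have E: "{i \<in> Is t. p \<in> insert (ph t i) (blk t i) \<and> q \<in> insert (ph t i) (blk t i)} = {}"
  proof (rule ccontr)
    assume "{i \<in> Is t. p \<in> insert (ph t i) (blk t i) \<and> q \<in> insert (ph t i) (blk t i)} \<noteq> {}"
    then obtain i where i: "i \<in> Is t" "p \<in> insert (ph t i) (blk t i)" "q \<in> insert (ph t i) (blk t i)" by blast
    have "blk t i \<subseteq> Xs t" using blk_props[OF assms(4) i(1)] by simp
    then have "p = ph t i" "q = ph t i" using i assms(2,3) by auto
    then show False using assms(1) by simp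
  qed
  show ?thesis unfolding pair_count_def E by simp
qed

lemma nest: "t \<ge> 2 \<Longrightarrow> is_weak_nesting (Ys t) (nat (14*t+13)) (Is t) (blk t) 3 2 (ph t)"
proof -
  assume t: "t \<ge> 2"
  have fY: "finite (Ys t)" unfolding Ys_def Xs_def Hn_def by simp
  have fI: "finite (Is t)" unfolding Is_def by simp
  have XY: "Xs t \<subseteq> Ys t" unfolding Ys_def by auto
  have Y: "y \<in> Ys t \<Longrightarrow> y \<in> Xs t \<or> (\<exists>h \<in> Hn t. y = (h,4))" for y unfolding Ys_def by auto
  have pc: "pair_count (Is t) (\<lambda>i. insert (ph t i) (blk t i)) p q \<le> 3"
    if p: "p \<in> Ys t" and q: "q \<in> Ys t" and pq: "p \<noteq> q" for p q
  proof -
    consider "p \<in> Xs t" "q \<in> Xs t" | "p \<notin> Xs t" "q \<in> Xs t" | "p \<in> Xs t" "q \<notin> Xs t" | "p \<notin> Xs t" "q \<notin> Xs t"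
      by blast
    then show ?thesis
    proof cases
      case 1 then show ?thesis using pc_XX[OF t _ _ pq] by simp
    next
      case 2
      then obtain h where "h \<in> Hn t" "p = (h,4)" using Y[OF p] by auto
      then show ?thesis using pc_NX[OF t _ 2(2)] by simp
    next
      case 3
      then obtain h where "h \<in> Hn t" "q = (h,4)" using Y[OF q] by auto
      then show ?thesis using pc_NX[OF t _ 3(1)] pair_count_sym by metis
    next
      case 4 then show ?thesis using pc_NN[OF pq _ _ t] by simp
    qed
  qed
  have blocks: "insert (ph t i) (blk t i) \<subseteq> Ys t \<and> card (insert (ph t i) (blk t i)) = 3 + 1"
    if i: "i \<in> Is t" for i
  proof -
    have "blk t i \<subseteq> Xs t" "card (blk t i) = 3" using blk_props[OF t i] by auto
    moreover have "finite (blk t i)" using card_ge_0_finite[of "blk t i"] \<open>card (blk t i) = 3\<close> by simp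
    ultimately show ?thesis using ph_props[OF t i] XY by auto
  qed
  show ?thesis unfolding is_weak_nesting_def is_partial_BIBD_def
    using ph_props[OF t] fY card_Ys[OF t] fI blocks pc by auto
qed

theorem main_int:
  fixes t :: nat
  assumes "t \<ge> 2"
  shows "\<exists>(X :: nat set) (Y :: nat set) (I :: nat set) (B :: nat \<Rightarrow> nat set) (\<phi> :: nat \<Rightarrow> nat).
           is_BIBD X (12 * t + 10) 3 2 I B \<and> X \<subseteq> Y \<and> finite Y \<and> card Y = 14 * t + 13 \<and>
           is_weak_nesting Y (14 * t + 13) I B 3 2 \<phi>"
proof -
  define T where "T = int t"
  have T: "T \<ge> 2" using assms T_def by simp
  have e1: "nat (12*T+10) = 12*t+10" using T_def by simp
  have e2: "nat (14*T+13) = 14*t+13" using T_def by simp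
  have b: "is_BIBD (Xs T) (12*t+10) 3 2 (Is T) (blk T)" using bibd[OF T] e1 by simp
  have n: "is_weak_nesting (Ys T) (14*t+13) (Is T) (blk T) 3 2 (ph T)" using nest[OF T] e2 by simp
  have XY: "Xs T \<subseteq> Ys T" unfolding Ys_def by auto
  have fY: "finite (Ys T)" unfolding Ys_def Xs_def Hn_def by simp
  have cY: "card (Ys T) = 14*t+13" using card_Ys[OF T] e2 by simp
  show ?thesis by (rule transfer_all[OF b XY fY cY n])
qed

theorem theorem3p6:
  fixes t :: nat
  assumes "t \<ge> 2"
  shows "\<exists>(X :: nat set) (Y :: nat set) (I :: nat set) (B :: nat \<Rightarrow> nat set) (\<phi> :: nat \<Rightarrow> nat).
           is_BIBD X (12 * t + 10) 3 2 I B \<and> X \<subseteq> Y \<and> finite Y \<and> card Y = 14 * t + 13 \<and>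
           is_weak_nesting Y (14 * t + 13) I B 3 2 \<phi>"
    using main_int[OF assms] .

end
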